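(* For every odd integer $d\ge 3$ there exists a generalized bicycle code with parameters $[[d^2+1,2,d]]$ which is $(2,4)$-regular. Moreover, for every such $d$ except $d=3$, this code is degenerate, having non-identity stabilizers of weight $4<d$.
   Context: For $a(x),b(x)\in R_n=\mathbb{F}_2[x]/\langle x^n-1\rangle$, the generalized bicycle (GB) code is the CSS code on $2n$ qubits whose X-check matrix $H_X$ has rows $x^i(a(x),b(x))$, $0\le i\le n-1$, and whose Z-check matrix $H_Z$ has rows $x^i(b(x^{-1}),a(x^{-1}))$ (vectors of $\mathbb{F}_2^{2n}$ written as pairs of polynomials, $x^{-1}=x^{n-1}$); its dimension is $2n-\mathrm{rank}H_X-\mathrm{rank}H_Z$ and its minimum distance is the minimum weight of a Pauli operator commuting with all stabilizers but not in the stabilizer group. The code is $(2,4)$-regular if every row of $H_X$ and $H_Z$ has weight 4 and every column has weight 2. A code of minimum distance $d$ is degenerate if its stabilizer group contains a non-identity element of weight less than $d$. $[[N,K,D]]$: $N$ physical qubits, $K$ logical qubits, distance $D$. *)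

theory Defs
  imports Main "HOL-Library.Z2"
begin

text \<open>An element a(x) of R_n = F_2[x]/(x^n - 1) is given by its coefficient
  function (coefficient of x^k for k < n, zero for k >= n).\<close>

definition f2vec :: "nat \<Rightarrow> (nat \<Rightarrow> bit) set" where
  "f2vec N = {v. \<forall>j\<ge>N. v j = 0}"

definition ring_elem :: "nat \<Rightarrow> (nat \<Rightarrow> bit) \<Rightarrow> bool" where
  "ring_elem n a \<longleftrightarrow> a \<in> f2vec n"

text \<open>Row i of H_X: x^i (a(x), b(x)); coordinates 0..n-1 first block, n..2n-1 second.\<close>
definition hx_row :: "nat \<Rightarrow> (nat \<Rightarrow> bit) \<Rightarrow> (nat \<Rightarrow> bit) \<Rightarrow> nat \<Rightarrow> nat \<Rightarrow> bit" where
  "hx_row n a b i j =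
     (if j < n then a (nat ((int j - int i) mod int n))
      else if j < 2*n then b (nat ((int (j - n) - int i) mod int n))
      else 0)"

text \<open>Row i of H_Z: x^i (b(x^{-1}), a(x^{-1})).\<close>
definition hz_row :: "nat \<Rightarrow> (nat \<Rightarrow> bit) \<Rightarrow> (nat \<Rightarrow> bit) \<Rightarrow> nat \<Rightarrow> nat \<Rightarrow> bit" where
  "hz_row n a b i j =
     (if j < n then b (nat ((int i - int j) mod int n))
      else if j < 2*n then a (nat ((int i - int (j - n)) mod int n))
      else 0)"

definition f2span :: "(nat \<Rightarrow> bit) set \<Rightarrow> (nat \<Rightarrow> bit) set" where
  "f2span S = {(\<lambda>j. \<Sum>r\<in>R. r j) | R. finite R \<and> R \<subseteq> S}"

definition f2rank :: "(nat \<Rightarrow> nat \<Rightarrow> bit) \<Rightarrow> nat \<Rightarrow> nat" where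
  "f2rank H m = (LEAST k. \<exists>B. finite B \<and> card B = k \<and> f2span B = f2span (H ` {..<m}))"

definition gb_dim :: "nat \<Rightarrow> (nat \<Rightarrow> bit) \<Rightarrow> (nat \<Rightarrow> bit) \<Rightarrow> nat" where
  "gb_dim n a b = 2*n - f2rank (hx_row n a b) n - f2rank (hz_row n a b) n"

text \<open>Pauli operators on 2n qubits modulo phase: pairs (X-part, Z-part).\<close>
definition paulis :: "nat \<Rightarrow> ((nat \<Rightarrow> bit) \<times> (nat \<Rightarrow> bit)) set" where
  "paulis N = f2vec N \<times> f2vec N"

definition pauli_weight :: "nat \<Rightarrow> (nat \<Rightarrow> bit) \<times> (nat \<Rightarrow> bit) \<Rightarrow> nat" where
  "pauli_weight N p = card {j. j < N \<and> (fst p j \<noteq> 0 \<or> snd p j \<noteq> 0)}"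

text \<open>Symplectic form: 0 iff the two Pauli operators commute.\<close>
definition symp :: "nat \<Rightarrow> (nat \<Rightarrow> bit) \<times> (nat \<Rightarrow> bit) \<Rightarrow> (nat \<Rightarrow> bit) \<times> (nat \<Rightarrow> bit) \<Rightarrow> bit" where
  "symp N p q = (\<Sum>j<N. fst p j * snd q j + snd p j * fst q j)"

definition gb_stab :: "nat \<Rightarrow> (nat \<Rightarrow> bit) \<Rightarrow> (nat \<Rightarrow> bit) \<Rightarrow> ((nat \<Rightarrow> bit) \<times> (nat \<Rightarrow> bit)) set" where
  "gb_stab n a b = f2span (hx_row n a b ` {..<n}) \<times> f2span (hz_row n a b ` {..<n})"

definition gb_logical :: "nat \<Rightarrow> (nat \<Rightarrow> bit) \<Rightarrow> (nat \<Rightarrow> bit) \<Rightarrow> ((nat \<Rightarrow> bit) \<times> (nat \<Rightarrow> bit)) set" where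
  "gb_logical n a b = {p \<in> paulis (2*n). (\<forall>s\<in>gb_stab n a b. symp (2*n) p s = 0) \<and> p \<notin> gb_stab n a b}"

definition gb_distance :: "nat \<Rightarrow> (nat \<Rightarrow> bit) \<Rightarrow> (nat \<Rightarrow> bit) \<Rightarrow> nat" where
  "gb_distance n a b = (LEAST w. \<exists>p\<in>gb_logical n a b. pauli_weight (2*n) p = w)"

definition regular_2_4 :: "nat \<Rightarrow> (nat \<Rightarrow> nat \<Rightarrow> bit) \<Rightarrow> bool" where
  "regular_2_4 n H \<longleftrightarrow>
     (\<forall>i<n. card {j. j < 2*n \<and> H i j \<noteq> 0} = 4) \<and>
     (\<forall>j<2*n. card {i. i < n \<and> H i j \<noteq> 0} = 2)"

definition gb_regular_2_4 :: "nat \<Rightarrow> (nat \<Rightarrow> bit) \<Rightarrow> (nat \<Rightarrow> bit) \<Rightarrow> bool" where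
  "gb_regular_2_4 n a b \<longleftrightarrow> regular_2_4 n (hx_row n a b) \<and> regular_2_4 n (hz_row n a b)"

definition gb_degenerate :: "nat \<Rightarrow> (nat \<Rightarrow> bit) \<Rightarrow> (nat \<Rightarrow> bit) \<Rightarrow> bool" where
  "gb_degenerate n a b \<longleftrightarrow>
     (\<exists>s\<in>gb_stab n a b. s \<noteq> (\<lambda>_. 0, \<lambda>_. 0) \<and> pauli_weight (2*n) s < gb_distance n a b)"

end

theory Submission
  imports Defs
begin

declare add_bit_eq_xor[simp del] mult_bit_eq_and[simp del]


lemma bit_add_self[simp]: "(x::bit) + x = 0"
  by (cases x) auto

lemma of_nat_bit: "(of_nat k :: bit) = of_bool (odd k)"
  by (induction k) (auto simp: of_bool_def)

lemma nat_mod_diff_eq: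
  assumes "x < n" "y < n"
  shows "nat ((int x - int y) mod int n) = (if y \<le> x then x - y else x + n - y)"
proof (cases "y \<le> x")
  case True
  then have "int x - int y = int (x - y)" by simp
  then show ?thesis using True assms by (simp add: nat_mod_distrib)
next
  case False
  then have e: "int (x + n - y) = (int x - int y) + int n" using assms by simp
  have "(int x - int y) mod int n = int (x + n - y) mod int n" unfolding e by (simp only: mod_add_self2)
  also have "\<dots> = int (x + n - y)" using assms False by (intro mod_pos_pos_trivial) auto
  finally show ?thesis using False by simp
qed


lemma mod_lt2: "(y::nat) + k < 2*n \<Longrightarrow> (y+k) mod n = (if y+k<n then y+k else y+k-n)"
  by (simp add: le_mod_geq)

lemma modeq_iff:
  assumes "x < n" "y < n" "k < n"
  shows "nat ((int x - int y) mod int n) = k \<longleftrightarrow> x = (y+k) mod n"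
  using assms by (auto simp: nat_mod_diff_eq mod_lt2)

lemma mod_sub: "(x::nat) < n \<Longrightarrow> k \<le> n \<Longrightarrow> (x + n - k) mod n = (if k \<le> x then x - k else x + n - k)"
  by (auto simp: le_mod_geq)

lemma shift_inv:
  assumes "x < (n::nat)" "y < n" "k < n"
  shows "x = (y+k) mod n \<longleftrightarrow> y = (x + n - k) mod n"
  using assms by (auto simp: mod_lt2 mod_sub)

locale gbc =
  fixes m :: nat
  assumes m1: "1 \<le> m"
begin

definition n :: nat where "n = 2*m*m + 2*m + 1"
definition d :: nat where "d = 2*m + 1"
definition a :: "nat \<Rightarrow> bit" where "a = (\<lambda>k. of_bool (k = 0 \<or> k = 1))"
definition b :: "nat \<Rightarrow> bit" where "b = (\<lambda>k. of_bool (k = 0 \<or> k = d))"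

lemma n_eq: "n = m*d + m + 1" unfolding n_def d_def by (simp add: algebra_simps)
lemma md_eq: "(m+1)*d = n + m" unfolding n_def d_def by (simp add: algebra_simps)
lemma mm1: "1 \<le> m*m" using m1 by (metis mult_le_mono nat_mult_1)
lemma d_lt_n: "d < n" using mm1 unfolding n_def d_def by simp
lemma d3: "3 \<le> d" using m1 unfolding d_def by simp
lemma n_def2: "n = 2*(m*m) + 2*m + 1" unfolding n_def by (simp add: mult.assoc)
lemma n5: "5 \<le> n" using mm1 m1 n_def2 by linarith
lemma odd_n: "odd n" unfolding n_def by simp
lemma dd: "d*d + 1 = 2*n" unfolding n_def d_def by (simp add: algebra_simps)

lemma hxU: "i < n \<Longrightarrow> j < n \<Longrightarrow> hx_row n a b i j = of_bool (j = i \<or> j = (i+1) mod n)"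
  unfolding hx_row_def a_def using n5 modeq_iff[of j n i 0] modeq_iff[of j n i 1] by auto
lemma hxV: "i < n \<Longrightarrow> j < n \<Longrightarrow> hx_row n a b i (n+j) = of_bool (j = i \<or> j = (i+d) mod n)"
  unfolding hx_row_def b_def using n5 d_lt_n modeq_iff[of j n i 0] modeq_iff[of j n i d] by auto
lemma hzU: "i < n \<Longrightarrow> j < n \<Longrightarrow> hz_row n a b i j = of_bool (i = j \<or> i = (j+d) mod n)"
  unfolding hz_row_def b_def using n5 d_lt_n modeq_iff[of i n j 0] modeq_iff[of i n j d] by auto
lemma hzV: "i < n \<Longrightarrow> j < n \<Longrightarrow> hz_row n a b i (n+j) = of_bool (i = j \<or> i = (j+1) mod n)"
  unfolding hz_row_def a_def using n5 modeq_iff[of i n j 0] modeq_iff[of i n j 1] by auto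
lemma hx_out: "2*n \<le> j \<Longrightarrow> hx_row n a b i j = 0" unfolding hx_row_def by auto
lemma hz_out: "2*n \<le> j \<Longrightarrow> hz_row n a b i j = 0" unfolding hz_row_def by auto

end


definition ip :: "nat \<Rightarrow> (nat \<Rightarrow> bit) \<Rightarrow> (nat \<Rightarrow> bit) \<Rightarrow> bit" where
  "ip N x y = (\<Sum>j<N. x j * y j)"

lemma bit_cases2: "(x::bit) = 0 \<or> x = 1" by (cases x) auto

lemma bit_eq_add: "(x::bit) + y = 0 \<longleftrightarrow> x = y"
  by (cases x; cases y) auto

lemma sum_two_pts:
  fixes c :: "nat \<Rightarrow> 'a::comm_monoid_add"
  assumes "p \<noteq> q" "p \<in> A" "q \<in> A" "finite A"
  shows "(\<Sum>j\<in>A. (if j = p \<or> j = q then c j else 0)) = c p + c q"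
proof -
  have "(\<Sum>j\<in>A. (if j = p \<or> j = q then c j else 0)) = (\<Sum>j\<in>{p,q}. c j)"
    using assms by (intro sum.mono_neutral_cong_right) auto
  then show ?thesis using assms by simp
qed

lemma sum_two_pts_bit:
  fixes c :: "nat \<Rightarrow> bit"
  assumes "p \<noteq> q" "p \<in> A" "q \<in> A" "finite A"
  shows "(\<Sum>j\<in>A. c j * of_bool (j = p \<or> j = q)) = c p + c q"
  using sum_two_pts[OF assms, of c] by (simp add: of_bool_def if_distrib cong: if_cong)

lemma sum_ind2_bit:
  assumes "p \<noteq> q" "finite K"
  shows "(\<Sum>i\<in>K. (of_bool (i = p \<or> i = q) :: bit)) = of_bool (p \<in> K) + of_bool (q \<in> K)"
proof -
  have "\<And>i. (of_bool (i = p \<or> i = q)::bit) = (if i = p then 1 else 0) + (if i = q then 1 else 0)"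
    using assms by auto
  then have "(\<Sum>i\<in>K. (of_bool (i = p \<or> i = q) :: bit)) = (\<Sum>i\<in>K. (if i = p then 1 else 0)) + (\<Sum>i\<in>K. (if i = q then 1 else 0))"
    by (simp only: sum.distrib)
  also have "\<dots> = of_bool (p \<in> K) + of_bool (q \<in> K)" using assms(2) by (simp only: sum.delta) simp
  finally show ?thesis .
qed

lemma sum_split2n:
  fixes f :: "nat \<Rightarrow> 'a::comm_monoid_add"
  shows "(\<Sum>j<2*n. f j) = (\<Sum>j<n. f j) + (\<Sum>j<n. f (n+j))"
proof -
  have "x \<in> (\<lambda>j. n+j) ` {..<n}" if "x < 2*n" "x \<notin> {..<n}" for x
    using that by (intro image_eqI[of _ _ "x-n"]) auto
  then have "{..<2*n} = {..<n} \<union> (\<lambda>j. n+j) ` {..<n}" by auto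
  moreover have "sum f ((\<lambda>j. n+j) ` {..<n}) = (\<Sum>j<n. f (n+j))"
    by (subst sum.reindex) (auto simp: inj_on_def)
  moreover have "{..<n} \<inter> (\<lambda>j. n+j) ` {..<n} = {}" by auto
  ultimately show ?thesis by (simp add: sum.union_disjoint)
qed

lemma card_split2n:
  fixes n :: nat shows "card {j. j < 2*n \<and> P j} = card {j. j < n \<and> P j} + card {j. j < n \<and> P (n+j)}"
proof -
  have "x \<in> (\<lambda>j. n+j) ` {j. j < n \<and> P (n+j)}" if "x < 2*n" "\<not> x < n" "P x" for x
    using that by (intro image_eqI[of _ _ "x-n"]) auto
  then have e: "{j. j < 2*n \<and> P j} = {j. j < n \<and> P j} \<union> (\<lambda>j. n+j) ` {j. j < n \<and> P (n+j)}" by auto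
  have "card ((\<lambda>j. n+j) ` {j. j < n \<and> P (n+j)}) = card {j. j < n \<and> P (n+j)}"
    by (rule card_image) (auto simp: inj_on_def)
  then show ?thesis unfolding e by (subst card_Un_disjoint) auto
qed

lemma card_two_pts:
  assumes "p \<noteq> q" "p < n" "q < n"
  shows "card {j. j < n \<and> (of_bool (j = p \<or> j = q) :: bit) \<noteq> 0} = 2"
proof -
  have "{j. j < n \<and> (of_bool (j = p \<or> j = q) :: bit) \<noteq> 0} = {p, q}" using assms by auto
  then show ?thesis using assms by simp
qed

context gbc
begin

abbreviation HX where "HX \<equiv> hx_row n a b"
abbreviation HZ where "HZ \<equiv> hz_row n a b"

lemma modSuc: "x < n \<Longrightarrow> Suc x mod n = (if Suc x = n then 0 else Suc x)"
  by auto
lemma ne1: "x < n \<Longrightarrow> x \<noteq> (x+1) mod n" using n5 by (auto simp: modSuc)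
lemma ned: "x < n \<Longrightarrow> x \<noteq> (x+d) mod n" using n5 d_lt_n d3 by (auto simp: mod_lt2)
lemma nem1: "x < n \<Longrightarrow> x \<noteq> (x+n-1) mod n" using n5 by (auto simp: mod_sub)
lemma nemd: "x < n \<Longrightarrow> x \<noteq> (x+n-d) mod n" using n5 d_lt_n d3 by (auto simp: mod_sub)
lemma lt1: "(x+1) mod n < n" "(x+d) mod n < n" "(x+n-1) mod n < n" "(x+n-d) mod n < n"
  using n5 by auto

lemma hxU_col: "i < n \<Longrightarrow> j < n \<Longrightarrow> HX i j = of_bool (i = j \<or> i = (j+n-1) mod n)"
  using hxU shift_inv[of j n i 1] n5 by auto
lemma hxV_col: "i < n \<Longrightarrow> j < n \<Longrightarrow> HX i (n+j) = of_bool (i = j \<or> i = (j+n-d) mod n)"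
  using hxV shift_inv[of j n i d] d_lt_n by auto
lemma hzU_row: "i < n \<Longrightarrow> j < n \<Longrightarrow> HZ i j = of_bool (j = i \<or> j = (i+n-d) mod n)"
  using hzU shift_inv[of i n j d] d_lt_n by auto
lemma hzV_row: "i < n \<Longrightarrow> j < n \<Longrightarrow> HZ i (n+j) = of_bool (j = i \<or> j = (i+n-1) mod n)"
  using hzV shift_inv[of i n j 1] n5 by auto

lemma ip_HZ: "i < n \<Longrightarrow> ip (2*n) c (HZ i) = c i + c ((i+n-d) mod n) + c (n+i) + c (n + (i+n-1) mod n)"
proof -
  assume i: "i < n"
  have "ip (2*n) c (HZ i) = (\<Sum>j<n. c j * HZ i j) + (\<Sum>j<n. c (n+j) * HZ i (n+j))"
    unfolding ip_def by (rule sum_split2n)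
  also have "(\<Sum>j<n. c j * HZ i j) = (\<Sum>j<n. c j * of_bool (j = i \<or> j = (i+n-d) mod n))"
    using i by (intro sum.cong) (auto simp: hzU_row)
  also have "\<dots> = c i + c ((i+n-d) mod n)" using i nemd lt1 by (intro sum_two_pts_bit) auto
  also have "(\<Sum>j<n. c (n+j) * HZ i (n+j)) = (\<Sum>j<n. c (n+j) * of_bool (j = i \<or> j = (i+n-1) mod n))"
    using i by (intro sum.cong) (auto simp: hzV_row)
  also have "\<dots> = c (n+i) + c (n + (i+n-1) mod n)" using i nem1 lt1
    by (intro sum_two_pts_bit[where c="\<lambda>j. c (n+j)"]) auto
  finally show ?thesis by (simp add: add.assoc)
qed

lemma ip_HX: "i < n \<Longrightarrow> ip (2*n) c (HX i) = c i + c ((i+1) mod n) + c (n+i) + c (n + (i+d) mod n)"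
proof -
  assume i: "i < n"
  have "ip (2*n) c (HX i) = (\<Sum>j<n. c j * HX i j) + (\<Sum>j<n. c (n+j) * HX i (n+j))"
    unfolding ip_def by (rule sum_split2n)
  also have "(\<Sum>j<n. c j * HX i j) = (\<Sum>j<n. c j * of_bool (j = i \<or> j = (i+1) mod n))"
    using i by (intro sum.cong) (auto simp: hxU)
  also have "\<dots> = c i + c ((i+1) mod n)" using i ne1 lt1 by (intro sum_two_pts_bit) auto
  also have "(\<Sum>j<n. c (n+j) * HX i (n+j)) = (\<Sum>j<n. c (n+j) * of_bool (j = i \<or> j = (i+d) mod n))"
    using i by (intro sum.cong) (auto simp: hxV)
  also have "\<dots> = c (n+i) + c (n + (i+d) mod n)" using i ned lt1
    by (intro sum_two_pts_bit[where c="\<lambda>j. c (n+j)"]) auto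
  finally show ?thesis by (simp add: add.assoc)
qed

lemma sumHX_U: "K \<subseteq> {..<n} \<Longrightarrow> j < n \<Longrightarrow> (\<Sum>i\<in>K. HX i j) = of_bool (j \<in> K) + of_bool ((j+n-1) mod n \<in> K)"
proof -
  assume K: "K \<subseteq> {..<n}" and j: "j < n"
  have "(\<Sum>i\<in>K. HX i j) = (\<Sum>i\<in>K. of_bool (i = j \<or> i = (j+n-1) mod n))"
    using K j by (intro sum.cong) (auto simp: hxU_col)
  also have "\<dots> = of_bool (j \<in> K) + of_bool ((j+n-1) mod n \<in> K)" using nem1[OF j] K finite_subset by (intro sum_ind2_bit) auto
  finally show ?thesis .
qed
lemma sumHX_V: "K \<subseteq> {..<n} \<Longrightarrow> j < n \<Longrightarrow> (\<Sum>i\<in>K. HX i (n+j)) = of_bool (j \<in> K) + of_bool ((j+n-d) mod n \<in> K)"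
proof -
  assume K: "K \<subseteq> {..<n}" and j: "j < n"
  have "(\<Sum>i\<in>K. HX i (n+j)) = (\<Sum>i\<in>K. of_bool (i = j \<or> i = (j+n-d) mod n))"
    using K j by (intro sum.cong) (auto simp: hxV_col)
  also have "\<dots> = of_bool (j \<in> K) + of_bool ((j+n-d) mod n \<in> K)" using nemd[OF j] K finite_subset by (intro sum_ind2_bit) auto
  finally show ?thesis .
qed
lemma sumHZ_U: "K \<subseteq> {..<n} \<Longrightarrow> j < n \<Longrightarrow> (\<Sum>i\<in>K. HZ i j) = of_bool (j \<in> K) + of_bool ((j+d) mod n \<in> K)"
proof -
  assume K: "K \<subseteq> {..<n}" and j: "j < n"
  have "(\<Sum>i\<in>K. HZ i j) = (\<Sum>i\<in>K. of_bool (i = j \<or> i = (j+d) mod n))"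
    using K j by (intro sum.cong) (auto simp: hzU)
  also have "\<dots> = of_bool (j \<in> K) + of_bool ((j+d) mod n \<in> K)" using ned[OF j] K finite_subset by (intro sum_ind2_bit) auto
  finally show ?thesis .
qed
lemma sumHZ_V: "K \<subseteq> {..<n} \<Longrightarrow> j < n \<Longrightarrow> (\<Sum>i\<in>K. HZ i (n+j)) = of_bool (j \<in> K) + of_bool ((j+1) mod n \<in> K)"
proof -
  assume K: "K \<subseteq> {..<n}" and j: "j < n"
  have "(\<Sum>i\<in>K. HZ i (n+j)) = (\<Sum>i\<in>K. of_bool (i = j \<or> i = (j+1) mod n))"
    using K j by (intro sum.cong) (auto simp: hzV)
  also have "\<dots> = of_bool (j \<in> K) + of_bool ((j+1) mod n \<in> K)" using ne1[OF j] K finite_subset by (intro sum_ind2_bit) auto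
  finally show ?thesis .
qed

end


lemma span_inj:
  assumes "inj_on H A" "finite A"
  shows "f2span (H ` A) = {(\<lambda>j. \<Sum>i\<in>I. H i j) | I. I \<subseteq> A}"
proof
  show "f2span (H ` A) \<subseteq> {(\<lambda>j. \<Sum>i\<in>I. H i j) | I. I \<subseteq> A}"
  proof
    fix v assume "v \<in> f2span (H ` A)"
    then obtain R where R: "finite R" "R \<subseteq> H ` A" "v = (\<lambda>j. \<Sum>r\<in>R. r j)"
      unfolding f2span_def by auto
    define I where "I = {i \<in> A. H i \<in> R}"
    have RI: "R = H ` I" using R(2) unfolding I_def by auto
    have "inj_on H I" using assms(1) unfolding I_def by (rule inj_on_subset) auto
    then have "(\<lambda>j. \<Sum>r\<in>R. r j) = (\<lambda>j. \<Sum>i\<in>I. H i j)" unfolding RI by (simp add: sum.reindex)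
    then show "v \<in> {(\<lambda>j. \<Sum>i\<in>I. H i j) | I. I \<subseteq> A}" using R(3) unfolding I_def by auto
  qed
next
  show "{(\<lambda>j. \<Sum>i\<in>I. H i j) | I. I \<subseteq> A} \<subseteq> f2span (H ` A)"
  proof
    fix v assume "v \<in> {(\<lambda>j. \<Sum>i\<in>I. H i j) | I. I \<subseteq> A}"
    then obtain I where I: "I \<subseteq> A" "v = (\<lambda>j. \<Sum>i\<in>I. H i j)" by auto
    have "inj_on H I" using assms(1) I(1) by (rule inj_on_subset)
    then have "v = (\<lambda>j. \<Sum>r\<in>H ` I. r j)" using I(2) by (simp add: sum.reindex)
    moreover have "finite (H ` I)" using I(1) assms(2) finite_subset by blast
    ultimately show "v \<in> f2span (H ` A)" unfolding f2span_def using I(1) by blast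
  qed
qed

lemma rot_bij:
  assumes "k \<le> n" "0 < (n::nat)"
  shows "bij_betw (\<lambda>j. (j+k) mod n) {..<n} {..<n}"
proof -
  have inj: "inj_on (\<lambda>j. (j+k) mod n) {..<n}"
    unfolding inj_on_def using assms by (auto simp: mod_lt2 split: if_splits)
  moreover have "(\<lambda>j. (j+k) mod n) ` {..<n} \<subseteq> {..<n}" using assms by auto
  ultimately have "(\<lambda>j. (j+k) mod n) ` {..<n} = {..<n}" by (intro endo_inj_surj) auto
  with inj show ?thesis unfolding bij_betw_def by auto
qed

lemma rot_sum:
  assumes "k \<le> n" "0 < (n::nat)"
  shows "(\<Sum>j<n. h ((j+k) mod n)) = (\<Sum>j<n. h j)"
  using sum.reindex_bij_betw[OF rot_bij[OF assms], of h] by simp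

context gbc
begin

lemma inj_HX: "inj_on HX {..<n}"
proof (rule inj_onI)
  fix i i' assume i: "i \<in> {..<n}" "i' \<in> {..<n}" and e: "HX i = HX i'"
  have "HX i i = 1" "HX i (n+i) = 1" using i by (auto simp: hxU hxV)
  then have "HX i' i = 1" "HX i' (n+i) = 1" using e by auto
  then have "i = i' \<or> i = (i'+1) mod n" "i = i' \<or> i = (i'+d) mod n" using i by (auto simp: hxU hxV)
  then show "i = i'" using i d_lt_n d3 by (auto simp: mod_lt2 modSuc split: if_splits)
qed

lemma inj_HZ: "inj_on HZ {..<n}"
proof (rule inj_onI)
  fix i i' assume i: "i \<in> {..<n}" "i' \<in> {..<n}" and e: "HZ i = HZ i'"
  have "HZ i i = 1" "HZ i (n+i) = 1" using i by (auto simp: hzU hzV)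
  then have "HZ i' i = 1" "HZ i' (n+i) = 1" using e by auto
  then have "i' = i \<or> i' = (i+1) mod n" "i' = i \<or> i' = (i+d) mod n" using i by (auto simp: hzU hzV)
  then show "i = i'" using i d_lt_n d3 by (auto simp: mod_lt2 modSuc split: if_splits)
qed

lemma spanX: "f2span (HX ` {..<n}) = {(\<lambda>j. \<Sum>i\<in>I. HX i j) | I. I \<subseteq> {..<n}}"
  by (rule span_inj[OF inj_HX]) auto
lemma spanZ: "f2span (HZ ` {..<n}) = {(\<lambda>j. \<Sum>i\<in>I. HZ i j) | I. I \<subseteq> {..<n}}"
  by (rule span_inj[OF inj_HZ]) auto

definition pu :: "(nat \<Rightarrow> bit) \<Rightarrow> bit" where "pu c = (\<Sum>j<n. c j)"
definition pv :: "(nat \<Rightarrow> bit) \<Rightarrow> bit" where "pv c = (\<Sum>j<n. c (n+j))"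

lemma one_one: "(1::bit) + 1 = 0" by simp

lemma pu_HX: "i < n \<Longrightarrow> pu (HX i) = 0"
proof -
  assume i: "i < n"
  have "pu (HX i) = (\<Sum>j<n. of_bool (j = i \<or> j = (i+1) mod n))" unfolding pu_def using i by (intro sum.cong) (auto simp: hxU)
  also have "\<dots> = 0" using i ne1[OF i] lt1 by (subst sum_ind2_bit) auto
  finally show ?thesis .
qed
lemma pv_HX: "i < n \<Longrightarrow> pv (HX i) = 0"
proof -
  assume i: "i < n"
  have "pv (HX i) = (\<Sum>j<n. of_bool (j = i \<or> j = (i+d) mod n))" unfolding pv_def using i by (intro sum.cong) (auto simp: hxV)
  also have "\<dots> = 0" using i ned[OF i] lt1 by (subst sum_ind2_bit) auto
  finally show ?thesis .
qed
lemma pu_HZ: "i < n \<Longrightarrow> pu (HZ i) = 0"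
proof -
  assume i: "i < n"
  have "pu (HZ i) = (\<Sum>j<n. of_bool (j = i \<or> j = (i+n-d) mod n))" unfolding pu_def using i by (intro sum.cong) (auto simp: hzU_row)
  also have "\<dots> = 0" using i nemd[OF i] lt1 by (subst sum_ind2_bit) auto
  finally show ?thesis .
qed
lemma pv_HZ: "i < n \<Longrightarrow> pv (HZ i) = 0"
proof -
  assume i: "i < n"
  have "pv (HZ i) = (\<Sum>j<n. of_bool (j = i \<or> j = (i+n-1) mod n))" unfolding pv_def using i by (intro sum.cong) (auto simp: hzV_row)
  also have "\<dots> = 0" using i nem1[OF i] lt1 by (subst sum_ind2_bit) auto
  finally show ?thesis .
qed

lemma pu_sum: "pu (\<lambda>j. \<Sum>i\<in>I. H i j) = (\<Sum>i\<in>I. pu (H i))"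
  unfolding pu_def by (rule sum.swap)
lemma pv_sum: "pv (\<lambda>j. \<Sum>i\<in>I. H i j) = (\<Sum>i\<in>I. pv (H i))"
  unfolding pv_def by (rule sum.swap)

lemma par_spanX: "v \<in> f2span (HX ` {..<n}) \<Longrightarrow> pu v = 0 \<and> pv v = 0"
  unfolding spanX using pu_HX pv_HX by (auto simp: pu_sum pv_sum subset_iff intro!: sum.neutral)
lemma par_spanZ: "v \<in> f2span (HZ ` {..<n}) \<Longrightarrow> pu v = 0 \<and> pv v = 0"
  unfolding spanZ using pu_HZ pv_HZ by (auto simp: pu_sum pv_sum subset_iff intro!: sum.neutral)

lemma ip_sum: "ip N c (\<lambda>j. \<Sum>i\<in>I. H i j) = (\<Sum>i\<in>I. ip N c (H i))"
  unfolding ip_def by (simp add: sum_distrib_left sum.swap[of _ I])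

lemma ip_comm: "ip N x y = ip N y x" unfolding ip_def by (simp add: mult.commute)

lemma orth_spanZ: "(\<And>i. i < n \<Longrightarrow> ip (2*n) c (HZ i) = 0) \<Longrightarrow> v \<in> f2span (HZ ` {..<n}) \<Longrightarrow> ip (2*n) c v = 0"
  unfolding spanZ by (auto simp: ip_sum subset_iff intro!: sum.neutral)
lemma orth_spanX: "(\<And>i. i < n \<Longrightarrow> ip (2*n) c (HX i) = 0) \<Longrightarrow> v \<in> f2span (HX ` {..<n}) \<Longrightarrow> ip (2*n) c v = 0"
  unfolding spanX by (auto simp: ip_sum subset_iff intro!: sum.neutral)

lemma of_nat_n: "(of_nat n :: bit) = 1" using odd_n by (simp add: of_nat_bit)

lemma step1:
  assumes c: "c \<in> f2vec (2*n)" and orth: "\<And>i. i < n \<Longrightarrow> ip (2*n) c (HZ i) = 0"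
    and pu0: "pu c = 0" and pv0: "pv c = 0"
  shows "c \<in> f2span (HX ` {..<n})"
proof -
  define f where "f k = (\<Sum>l\<in>{..k}. c l)" for k
  have F1: "f k + f ((k+n-1) mod n) = c k" if k: "k < n" for k
  proof (cases k)
    case 0
    have "(0+n-1) mod n = n - 1" using n5 by simp
    moreover have "{..n-1} = {..<n}" using n5 by auto
    ultimately have "f ((k+n-1) mod n) = 0" using pu0 unfolding f_def pu_def 0 by simp
    then show ?thesis unfolding f_def 0 by simp
  next
    case (Suc k')
    have e: "(k+n-1) mod n = k'" using k Suc by (simp add: mod_sub)
    have e2: "f k = f k' + c k" unfolding f_def Suc by simp
    have "f k + f ((k+n-1) mod n) = (f k' + c k) + f k'" by (simp only: e e2)
    also have "\<dots> = c k + (f k' + f k')" by (simp only: ac_simps)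
    also have "\<dots> = c k" by simp
    finally show ?thesis .
  qed
  define I where "I = {i. i < n \<and> f i = 1}"
  have I: "I \<subseteq> {..<n}" unfolding I_def by auto
  have fI: "of_bool (i \<in> I) = f i" if "i < n" for i
    using that bit_cases2[of "f i"] unfolding I_def by auto
  have U: "(\<Sum>i\<in>I. HX i j) = c j" if j: "j < n" for j
    using sumHX_U[OF I j] fI[OF j] fI[OF lt1(3)] F1[OF j] by simp
  define g where "g j = f j + f ((j+n-d) mod n) + c (n+j)" for j
  have G: "g (Suc j) = g j" if j: "Suc j < n" for j
  proof -
    have e1: "(Suc j + n - 1) mod n = j" using j by (simp add: mod_sub)
    have e2: "((Suc j + n - d) mod n + n - 1) mod n = (j + n - d) mod n"
    proof -
      have e3: "(Suc j + n - d) mod n = (if d \<le> Suc j then Suc j - d else Suc j + n - d)"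
        using j d_lt_n by (intro mod_sub) auto
      have e4: "(j + n + n - d) mod n = j + n - d" if "\<not> d \<le> Suc j"
      proof -
        have q: "j + n + n - d = (j + n - d) + n" using d_lt_n by auto
        have "(j + n + n - d) mod n = ((j + n - d) + n) mod n" by (simp only: q)
        also have "\<dots> = (j + n - d) mod n" by (rule mod_add_self2)
        also have "\<dots> = j + n - d" using that j by (intro mod_less) auto
        finally show ?thesis .
      qed
      show ?thesis unfolding e3 using j d_lt_n d3 e4 by (auto simp: mod_sub)
    qed
    have h1: "f (Suc j) + f j = c (Suc j)" using F1[OF j] e1 by simp
    have h2: "f ((Suc j + n - d) mod n) + f ((j + n - d) mod n) = c ((Suc j + n - d) mod n)"
      using F1[OF lt1(4)[of "Suc j"]] e2 by simp
    have h3: "c (Suc j) + c ((Suc j + n - d) mod n) + c (n + Suc j) + c (n + j) = 0"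
      using orth[OF j] ip_HZ[OF j] e1 by simp
    have "g (Suc j) + g j = (f (Suc j) + f j) + (f ((Suc j + n - d) mod n) + f ((j + n - d) mod n)) + c (n + Suc j) + c (n+j)"
      unfolding g_def by (simp only: ac_simps)
    also have "\<dots> = c (Suc j) + c ((Suc j + n - d) mod n) + c (n + Suc j) + c (n + j)" by (simp only: h1 h2)
    also have "\<dots> = 0" by (rule h3)
    finally show ?thesis by (simp add: bit_eq_add)
  qed
  have Gc: "j < n \<Longrightarrow> g j = g 0" for j
  proof (induction j)
    case 0 show ?case by (rule refl)
  next
    case (Suc j)
    then have "g j = g 0" by simp
    then show ?case using G[OF Suc.prems] by (rule trans[rotated])
  qed
  have "(\<Sum>j<n. g j) = (\<Sum>j<n. g 0)" by (rule sum.cong[OF refl]) (rule Gc, simp)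
  also have "\<dots> = g 0" by (simp only: sum_constant card_lessThan of_nat_n mult_1)
  finally have s1: "(\<Sum>j<n. g j) = g 0" .
  have "(\<Sum>j<n. f ((j+(n-d)) mod n)) = (\<Sum>j<n. f j)" using d_lt_n by (intro rot_sum) auto
  moreover have "\<And>j. j + (n-d) = j + n - d" using d_lt_n by auto
  ultimately have rs: "(\<Sum>j<n. f ((j+n-d) mod n)) = (\<Sum>j<n. f j)" by simp
  have "(\<Sum>j<n. g j) = (\<Sum>j<n. f j) + (\<Sum>j<n. f ((j+n-d) mod n)) + pv c"
    unfolding g_def pv_def by (simp add: sum.distrib)
  also have "\<dots> = 0" using rs pv0 by simp
  finally have g0: "g 0 = 0" using s1 by simp
  have V: "(\<Sum>i\<in>I. HX i (n+j)) = c (n+j)" if j: "j < n" for j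
  proof -
    have "g j = 0" using Gc[OF j] g0 by simp
    then have "f j + f ((j+n-d) mod n) = c (n+j)" unfolding g_def by (simp add: bit_eq_add)
    then show ?thesis using sumHX_V[OF I j] fI[OF j] fI[OF lt1(4)] by simp
  qed
  have "c = (\<lambda>J. \<Sum>i\<in>I. HX i J)"
  proof
    fix J
    show "c J = (\<Sum>i\<in>I. HX i J)"
    proof (cases "J < n")
      case True then show ?thesis using U by simp
    next
      case False
      show ?thesis
      proof (cases "J < 2*n")
        case True
        then have "J = n + (J - n)" "J - n < n" using False by auto
        then show ?thesis using V by metis
      next
        case False
        then show ?thesis using c unfolding f2vec_def by (auto simp: hx_out intro!: sum.neutral[symmetric])
      qed
    qed
  qed
  then show ?thesis unfolding spanX using I by auto
qed

end


lemma int_dvd_small: "x < n \<Longrightarrow> y < n \<Longrightarrow> int n dvd (int x - int y) \<Longrightarrow> x = y"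
proof (rule ccontr)
  assume a: "x < n" "y < n" "int n dvd (int x - int y)" "x \<noteq> y"
  then have "int x - int y \<noteq> 0" by simp
  then have "\<bar>int n\<bar> \<le> \<bar>int x - int y\<bar>" using a(3) by (rule dvd_imp_le_int)
  then show False using a by linarith
qed

lemma count_bij:
  assumes inj: "inj_on g {..<n}" and img: "g ` {..<n} \<subseteq> {..<n}" and l: "l \<le> n"
  shows "card {k. k < n \<and> g k < l} = l"
proof -
  have surj: "g ` {..<n} = {..<n}" using inj img by (intro endo_inj_surj) auto
  have "g ` {k. k < n \<and> g k < l} = {..<l}"
  proof
    show "g ` {k. k < n \<and> g k < l} \<subseteq> {..<l}" by auto
    show "{..<l} \<subseteq> g ` {k. k < n \<and> g k < l}"
    proof
      fix r assume r: "r \<in> {..<l}"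
      then have "r \<in> g ` {..<n}" using surj l by auto
      then obtain k where "k < n" "r = g k" by auto
      then show "r \<in> g ` {k. k < n \<and> g k < l}" using r by auto
    qed
  qed
  moreover have "inj_on g {k. k < n \<and> g k < l}" using inj by (rule inj_on_subset) auto
  ultimately show ?thesis using card_image by fastforce
qed

lemma count_interval:
  assumes "0 < n" "l \<le> n"
  shows "card {k. k < n \<and> (int k - \<beta> - 1) mod int n < int l} = l"
proof -
  define g where "g k = nat ((int k - \<beta> - 1) mod int n)" for k
  have "inj_on g {..<n}"
  proof (rule inj_onI)
    fix x y assume xy: "x \<in> {..<n}" "y \<in> {..<n}" "g x = g y"
    then have "(int x - \<beta> - 1) mod int n = (int y - \<beta> - 1) mod int n"
      unfolding g_def using assms by (simp add: nat_eq_iff2)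
    then have "int n dvd ((int x - \<beta> - 1) - (int y - \<beta> - 1))" by (simp add: mod_eq_dvd_iff)
    then show "x = y" using xy by (intro int_dvd_small) auto
  qed
  moreover have "g ` {..<n} \<subseteq> {..<n}" unfolding g_def using assms by (auto simp: nat_less_iff)
  ultimately have "card {k. k < n \<and> g k < l} = l" using assms by (intro count_bij) auto
  moreover have "{k. k < n \<and> g k < l} = {k. k < n \<and> (int k - \<beta> - 1) mod int n < int l}"
    unfolding g_def using assms by (auto simp: nat_less_iff)
  ultimately show ?thesis by simp
qed

lemma xor_int:
  fixes \<theta> \<beta> :: int and n l :: nat
  assumes "0 < l" "l < n"
  shows "(of_bool ((\<theta> - \<beta> - 1) mod int n < int l) :: bit) + of_bool ((\<theta> + 1 - \<beta> - 1) mod int n < int l)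
       = of_bool (\<theta> mod int n = \<beta> mod int n) + of_bool (\<theta> mod int n = (\<beta> + int l) mod int n)"
proof -
  define r where "r = (\<theta> - \<beta>) mod int n"
  have r: "0 \<le> r" "r < int n" unfolding r_def using assms by auto
  have e1: "(\<theta> + 1 - \<beta> - 1) mod int n = r" unfolding r_def by simp
  have e2: "(\<theta> - \<beta> - 1) mod int n = (if r = 0 then int n - 1 else r - 1)"
  proof -
    have "(\<theta> - \<beta> - 1) mod int n = (r - 1) mod int n" unfolding r_def by (simp add: mod_diff_left_eq)
    also have "\<dots> = (if r = 0 then int n - 1 else r - 1)"
    proof (cases "r = 0")
      case True
      have "(-1::int) mod int n = int n - 1" using assms by (simp add: zmod_minus1)
      then show ?thesis using True by simp
    next
      case False then show ?thesis using r by (simp add: mod_pos_pos_trivial)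
    qed
    finally show ?thesis .
  qed
  have e3: "(\<theta> mod int n = \<beta> mod int n) \<longleftrightarrow> r = 0"
    unfolding r_def by (simp add: mod_eq_dvd_iff dvd_eq_mod_eq_0)
  have e4: "(\<theta> mod int n = (\<beta> + int l) mod int n) \<longleftrightarrow> r = int l"
  proof -
    have "(\<theta> mod int n = (\<beta> + int l) mod int n) \<longleftrightarrow> (\<theta> - \<beta>) mod int n = int l mod int n"
      by (simp add: mod_eq_dvd_iff algebra_simps)
    also have "int l mod int n = int l" using assms by simp
    finally show ?thesis unfolding r_def .
  qed
  show ?thesis unfolding e1 e2 e3 e4 using assms r by auto
qed

context gbc
begin

definition cP :: "(nat \<Rightarrow> int) \<Rightarrow> nat \<Rightarrow> (nat \<Rightarrow> int) \<Rightarrow> nat \<Rightarrow> int \<Rightarrow> nat \<Rightarrow> bool" where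
  "cP bu lu bv lv \<theta> J = (if J < n then (\<theta> - bu J - 1) mod int n < int lu
     else if J < 2*n then (\<theta> - bv (J - n) - 1) mod int n < int lv else False)"

definition cw where "cw bu lu bv lv \<theta> J = (of_bool (cP bu lu bv lv \<theta> J) :: bit)"

definition cut_ok where
  "cut_ok pot bu lu bv lv \<longleftrightarrow> 0 < lu \<and> lu < n \<and> 0 < lv \<and> lv < n \<and>
    (\<forall>j<n. (bu j mod int n = pot j mod int n \<and> (bu j + int lu) mod int n = pot ((j+d) mod n) mod int n) \<or>
           (bu j mod int n = pot ((j+d) mod n) mod int n \<and> (bu j + int lu) mod int n = pot j mod int n)) \<and>
    (\<forall>j<n. (bv j mod int n = pot j mod int n \<and> (bv j + int lv) mod int n = pot ((j+1) mod n) mod int n) \<or>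
           (bv j mod int n = pot ((j+1) mod n) mod int n \<and> (bv j + int lv) mod int n = pot j mod int n))"

lemma cut_step:
  assumes ok: "cut_ok pot bu lu bv lv"
  shows "cw bu lu bv lv \<theta> J + cw bu lu bv lv (\<theta>+1) J = (\<Sum>t\<in>{t. t < n \<and> pot t mod int n = \<theta> mod int n}. HZ t J)"
proof -
  define T where "T = {t. t < n \<and> pot t mod int n = \<theta> mod int n}"
  have T: "T \<subseteq> {..<n}" unfolding T_def by auto
  have memT: "x < n \<Longrightarrow> (x \<in> T) = (\<theta> mod int n = pot x mod int n)" for x unfolding T_def by auto
  have main: "cw bu lu bv lv \<theta> J + cw bu lu bv lv (\<theta>+1) J = (\<Sum>t\<in>T. HZ t J)"
  proof (cases "J < n")
    case True
    have L: "cw bu lu bv lv \<theta> J + cw bu lu bv lv (\<theta>+1) J =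
      of_bool (\<theta> mod int n = bu J mod int n) + of_bool (\<theta> mod int n = (bu J + int lu) mod int n)"
    proof -
      have "cw bu lu bv lv \<theta> J + cw bu lu bv lv (\<theta>+1) J = of_bool ((\<theta> - bu J - 1) mod int n < int lu) + of_bool ((\<theta> + 1 - bu J - 1) mod int n < int lu)"
        unfolding cw_def cP_def by (simp only: if_P[OF True])
      also have "\<dots> = of_bool (\<theta> mod int n = bu J mod int n) + of_bool (\<theta> mod int n = (bu J + int lu) mod int n)" using ok unfolding cut_ok_def by (intro xor_int) auto
      finally show ?thesis .
    qed
    have R: "(\<Sum>t\<in>T. HZ t J) = of_bool (\<theta> mod int n = pot J mod int n) + of_bool (\<theta> mod int n = pot ((J+d) mod n) mod int n)"
      using sumHZ_U[OF T True] memT[OF True] memT[OF lt1(2)] by simp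
    have hJ: "(bu J mod int n = pot J mod int n \<and> (bu J + int lu) mod int n = pot ((J+d) mod n) mod int n) \<or>
           (bu J mod int n = pot ((J+d) mod n) mod int n \<and> (bu J + int lu) mod int n = pot J mod int n)"
      using ok True unfolding cut_ok_def by blast
    then show ?thesis
    proof (elim disjE conjE)
      assume "bu J mod int n = pot J mod int n" "(bu J + int lu) mod int n = pot ((J+d) mod n) mod int n"
      then show ?thesis unfolding L R by (simp only:)
    next
      assume "bu J mod int n = pot ((J+d) mod n) mod int n" "(bu J + int lu) mod int n = pot J mod int n"
      then show ?thesis unfolding L R by (simp only: add.commute)
    qed
  next
    case False
    show ?thesis
    proof (cases "J < 2*n")
      case True
      define j where "j = J - n"
      have j: "j < n" "J = n + j" using True False unfolding j_def by auto
      have L: "cw bu lu bv lv \<theta> J + cw bu lu bv lv (\<theta>+1) J =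
        of_bool (\<theta> mod int n = bv j mod int n) + of_bool (\<theta> mod int n = (bv j + int lv) mod int n)"
      proof -
        have "cw bu lu bv lv \<theta> J + cw bu lu bv lv (\<theta>+1) J = of_bool ((\<theta> - bv j - 1) mod int n < int lv) + of_bool ((\<theta> + 1 - bv j - 1) mod int n < int lv)"
          unfolding cw_def cP_def j_def by (simp only: if_P[OF True] if_not_P[OF False])
        also have "\<dots> = of_bool (\<theta> mod int n = bv j mod int n) + of_bool (\<theta> mod int n = (bv j + int lv) mod int n)" using ok unfolding cut_ok_def by (intro xor_int) auto
        finally show ?thesis .
      qed
      have R: "(\<Sum>t\<in>T. HZ t J) = of_bool (\<theta> mod int n = pot j mod int n) + of_bool (\<theta> mod int n = pot ((j+1) mod n) mod int n)"
        unfolding j(2) using sumHZ_V[OF T j(1)] memT[OF j(1)] memT[OF lt1(1)] by simp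
      have hJ: "(bv j mod int n = pot j mod int n \<and> (bv j + int lv) mod int n = pot ((j+1) mod n) mod int n) \<or>
           (bv j mod int n = pot ((j+1) mod n) mod int n \<and> (bv j + int lv) mod int n = pot j mod int n)"
        using ok j unfolding cut_ok_def by blast
      then show ?thesis
      proof (elim disjE conjE)
        assume "bv j mod int n = pot j mod int n" "(bv j + int lv) mod int n = pot ((j+1) mod n) mod int n"
        then show ?thesis unfolding L R by (simp only:)
      next
        assume "bv j mod int n = pot ((j+1) mod n) mod int n" "(bv j + int lv) mod int n = pot j mod int n"
        then show ?thesis unfolding L R by (simp only: add.commute)
      qed
    next
      case False2: False
      then show ?thesis unfolding cw_def cP_def using False by (auto simp: hz_out intro!: sum.neutral[symmetric])
    qed
  qed
  then show ?thesis unfolding T_def .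
qed

lemma ip_add: "ip N c x + ip N c y = ip N c (\<lambda>J. x J + y J)"
  unfolding ip_def by (simp add: distrib_left sum.distrib)

lemma cut_const:
  assumes ok: "cut_ok pot bu lu bv lv" and orth: "\<And>i. i < n \<Longrightarrow> ip (2*n) c (HZ i) = 0"
  shows "ip (2*n) c (cw bu lu bv lv (int k)) = ip (2*n) c (cw bu lu bv lv 0)"
proof (induction k)
  case 0 then show ?case by simp
next
  case (Suc k)
  define T where "T = {t. t < n \<and> pot t mod int n = int k mod int n}"
  have T: "T \<subseteq> {..<n}" unfolding T_def by auto
  have "ip (2*n) c (cw bu lu bv lv (int k)) + ip (2*n) c (cw bu lu bv lv (int k + 1))
      = ip (2*n) c (\<lambda>J. \<Sum>t\<in>T. HZ t J)"
    unfolding ip_add T_def using cut_step[OF ok] by simp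
  also have "\<dots> = 0" unfolding ip_sum using T orth by (auto intro!: sum.neutral)
  finally have "ip (2*n) c (cw bu lu bv lv (int k + 1)) = ip (2*n) c (cw bu lu bv lv (int k))"
    by (simp add: bit_eq_add)
  then show ?case using Suc by (metis of_nat_Suc add.commute)
qed

end


lemma nat_sum_bool: fixes N :: nat shows "(\<Sum>x<N. (of_bool (P x) :: nat)) = card {x. x < N \<and> P x}"
proof -
  have "{..<N} \<inter> {x. P x} = {x. x < N \<and> P x}" by auto
  then show ?thesis by simp
qed

lemma bit_sum_bool: fixes N :: nat shows "(\<Sum>x<N. (of_bool (P x) :: bit)) = of_nat (card {x. x < N \<and> P x})"
proof -
  have "{..<N} \<inter> {x. P x} = {x. x < N \<and> P x}" by auto
  then show ?thesis by simp
qed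

context gbc
begin

lemma cnt_J:
  assumes ok: "cut_ok pot bu lu bv lv" and J: "J < 2*n"
  shows "card {\<theta>. \<theta> < n \<and> cP bu lu bv lv (int \<theta>) J} = (if J < n then lu else lv)"
proof (cases "J < n")
  case True
  then have "{\<theta>. \<theta> < n \<and> cP bu lu bv lv (int \<theta>) J} = {\<theta>. \<theta> < n \<and> (int \<theta> - bu J - 1) mod int n < int lu}"
    unfolding cP_def by auto
  then show ?thesis using True ok n5 unfolding cut_ok_def by (simp add: count_interval)
next
  case False
  then have "{\<theta>. \<theta> < n \<and> cP bu lu bv lv (int \<theta>) J} = {\<theta>. \<theta> < n \<and> (int \<theta> - bv (J-n) - 1) mod int n < int lv}"
    unfolding cP_def using J by auto
  then show ?thesis using False ok n5 unfolding cut_ok_def by (simp add: count_interval)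
qed

lemma cut_sum:
  assumes ok: "cut_ok pot bu lu bv lv"
  shows "(\<Sum>\<theta><n. ip (2*n) c (cw bu lu bv lv (int \<theta>))) = of_nat lu * pu c + of_nat lv * pv c"
proof -
  have "(\<Sum>\<theta><n. ip (2*n) c (cw bu lu bv lv (int \<theta>))) = (\<Sum>J<2*n. c J * (\<Sum>\<theta><n. cw bu lu bv lv (int \<theta>) J))"
    unfolding ip_def by (simp add: sum_distrib_left sum.swap[of _ "{..<n}"])
  also have "\<dots> = (\<Sum>J<2*n. c J * of_nat (if J < n then lu else lv))"
  proof (rule sum.cong[OF refl])
    fix J assume "J \<in> {..<2*n}"
    then have "(\<Sum>\<theta><n. cw bu lu bv lv (int \<theta>) J) = of_nat (if J < n then lu else lv)"
      unfolding cw_def bit_sum_bool using cnt_J[OF ok] by simp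
    then show "c J * (\<Sum>\<theta><n. cw bu lu bv lv (int \<theta>) J) = c J * of_nat (if J < n then lu else lv)" by simp
  qed
  also have "\<dots> = (\<Sum>J<n. c J * of_nat lu) + (\<Sum>j<n. c (n+j) * of_nat lv)"
    by (subst sum_split2n) simp
  also have "\<dots> = of_nat lu * pu c + of_nat lv * pv c"
    unfolding pu_def pv_def by (simp add: sum_distrib_left mult.commute)
  finally show ?thesis .
qed

lemma cut_val:
  assumes ok: "cut_ok pot bu lu bv lv" and orth: "\<And>i. i < n \<Longrightarrow> ip (2*n) c (HZ i) = 0"
  shows "ip (2*n) c (cw bu lu bv lv 0) = of_nat lu * pu c + of_nat lv * pv c"
proof -
  have "(\<Sum>\<theta><n. ip (2*n) c (cw bu lu bv lv (int \<theta>))) = (\<Sum>\<theta><n. ip (2*n) c (cw bu lu bv lv 0))"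
    by (rule sum.cong[OF refl]) (rule cut_const[OF ok orth])
  also have "\<dots> = ip (2*n) c (cw bu lu bv lv 0)" by (simp only: sum_constant card_lessThan of_nat_n mult_1)
  finally show ?thesis using cut_sum[OF ok] by simp
qed

lemma cut_bound:
  assumes ok: "cut_ok pot bu lu bv lv" and orth: "\<And>i. i < n \<Longrightarrow> ip (2*n) c (HZ i) = 0"
    and lu: "lu \<le> m+1" and lv: "lv \<le> m+1" and one: "ip (2*n) c (cw bu lu bv lv 0) = 1"
  shows "n \<le> (m+1) * card {J. J < 2*n \<and> c J \<noteq> 0}"
proof -
  define S where "S = {J. J < 2*n \<and> c J \<noteq> 0}"
  have finS: "finite S" unfolding S_def by auto
  have hit: "1 \<le> (\<Sum>J\<in>S. (of_bool (cP bu lu bv lv (int \<theta>) J) :: nat))" if th: "\<theta> < n" for \<theta>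
  proof -
    have ipth: "ip (2*n) c (cw bu lu bv lv (int \<theta>)) = 1" using cut_const[OF ok orth] one by simp
    have "\<exists>J\<in>S. cP bu lu bv lv (int \<theta>) J"
    proof (rule ccontr)
      assume "\<not> ?thesis"
      then have "\<And>J. J < 2*n \<Longrightarrow> c J * cw bu lu bv lv (int \<theta>) J = 0"
        unfolding S_def cw_def by auto
      then have "ip (2*n) c (cw bu lu bv lv (int \<theta>)) = 0" unfolding ip_def by (intro sum.neutral) auto
      then show False using ipth by simp
    qed
    then obtain J where J: "J \<in> S" "cP bu lu bv lv (int \<theta>) J" by auto
    have "(of_bool (cP bu lu bv lv (int \<theta>) J) :: nat) \<le> (\<Sum>J\<in>S. (of_bool (cP bu lu bv lv (int \<theta>) J) :: nat))"
      using J(1) finS by (intro member_le_sum) auto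
    then show ?thesis using J(2) by simp
  qed
  have "n = (\<Sum>\<theta><n. (1::nat))" by simp
  also have "\<dots> \<le> (\<Sum>\<theta><n. \<Sum>J\<in>S. (of_bool (cP bu lu bv lv (int \<theta>) J) :: nat))"
    using hit by (intro sum_mono) auto
  also have "\<dots> = (\<Sum>J\<in>S. \<Sum>\<theta><n. (of_bool (cP bu lu bv lv (int \<theta>) J) :: nat))" by (rule sum.swap)
  also have "\<dots> = (\<Sum>J\<in>S. (if J < n then lu else lv))"
  proof (rule sum.cong[OF refl])
    fix J assume "J \<in> S"
    then have "J < 2*n" unfolding S_def by auto
    then show "(\<Sum>\<theta><n. (of_bool (cP bu lu bv lv (int \<theta>) J) :: nat)) = (if J < n then lu else lv)"
      unfolding nat_sum_bool using cnt_J[OF ok] by simp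
  qed
  also have "\<dots> \<le> (\<Sum>J\<in>S. m+1)" using lu lv by (intro sum_mono) auto
  also have "\<dots> = (m+1) * card S" by simp
  finally show ?thesis unfolding S_def .
qed

definition pot1 :: "nat \<Rightarrow> int" where "pot1 t = int (m+1) * int t"
definition pot2 :: "nat \<Rightarrow> int" where "pot2 t = int m * int t"
definition bu2 :: "nat \<Rightarrow> int" where "bu2 t = int m * int t - int (m+1)"

lemma cong_helper: "(k * int ((x + s) mod n)) mod int n = (k * int x + k * int s) mod int n"
proof -
  have "int ((x + s) mod n) = (int x + int s) mod int n" by (simp add: zmod_int)
  then have "(k * int ((x + s) mod n)) mod int n = (k * ((int x + int s) mod int n)) mod int n" by simp
  also have "\<dots> = (k * (int x + int s)) mod int n" by (simp add: mod_mult_right_eq)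
  finally show ?thesis by (simp add: distrib_left)
qed

lemma md_int: "int (m+1) * int d = int n + int m"
  using md_eq by (metis of_nat_add of_nat_mult)
lemma nd_int: "int m * int d = int n - int (m+1)"
  using n_eq by (simp add: algebra_simps)

lemma ok1: "cut_ok pot1 pot1 m pot1 (m+1)"
  unfolding cut_ok_def
proof (intro conjI allI impI)
  show "0 < m" "m < n" "0 < m+1" "m+1 < n" using m1 d_lt_n unfolding d_def by auto
next
  fix j assume j: "j < n"
  have "pot1 ((j+d) mod n) mod int n = (int (m+1) * int j + int (m+1) * int d) mod int n"
    unfolding pot1_def by (rule cong_helper)
  also have "\<dots> = ((pot1 j + int m) + int n) mod int n" unfolding md_int pot1_def by (simp add: algebra_simps)
  also have "\<dots> = (pot1 j + int m) mod int n" by (rule mod_add_self2)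
  finally show "(pot1 j mod int n = pot1 j mod int n \<and> (pot1 j + int m) mod int n = pot1 ((j+d) mod n) mod int n) \<or>
           (pot1 j mod int n = pot1 ((j+d) mod n) mod int n \<and> (pot1 j + int m) mod int n = pot1 j mod int n)" by simp
next
  fix j assume j: "j < n"
  have "pot1 ((j+1) mod n) mod int n = (int (m+1) * int j + int (m+1) * int 1) mod int n"
    unfolding pot1_def by (rule cong_helper)
  then show "(pot1 j mod int n = pot1 j mod int n \<and> (pot1 j + int (m+1)) mod int n = pot1 ((j+1) mod n) mod int n) \<or>
           (pot1 j mod int n = pot1 ((j+1) mod n) mod int n \<and> (pot1 j + int (m+1)) mod int n = pot1 j mod int n)"
    unfolding pot1_def by simp
qed

lemma ok2: "cut_ok pot2 bu2 (m+1) pot2 m"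
  unfolding cut_ok_def
proof (intro conjI allI impI)
  show "0 < m" "m < n" "0 < m+1" "m+1 < n" using m1 d_lt_n unfolding d_def by auto
next
  fix j assume j: "j < n"
  have "pot2 ((j+d) mod n) mod int n = (int m * int j + int m * int d) mod int n"
    unfolding pot2_def by (rule cong_helper)
  also have "\<dots> = (bu2 j + int n) mod int n" unfolding nd_int bu2_def by (simp add: algebra_simps)
  also have "\<dots> = bu2 j mod int n" by (rule mod_add_self2)
  finally have "bu2 j mod int n = pot2 ((j+d) mod n) mod int n" by simp
  moreover have "bu2 j + int (m+1) = pot2 j" unfolding bu2_def pot2_def by simp
  ultimately show "(bu2 j mod int n = pot2 j mod int n \<and> (bu2 j + int (m+1)) mod int n = pot2 ((j+d) mod n) mod int n) \<or>
           (bu2 j mod int n = pot2 ((j+d) mod n) mod int n \<and> (bu2 j + int (m+1)) mod int n = pot2 j mod int n)" by simp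
next
  fix j assume j: "j < n"
  have "pot2 ((j+1) mod n) mod int n = (int m * int j + int m * int 1) mod int n"
    unfolding pot2_def by (rule cong_helper)
  then show "(pot2 j mod int n = pot2 j mod int n \<and> (pot2 j + int m) mod int n = pot2 ((j+1) mod n) mod int n) \<or>
           (pot2 j mod int n = pot2 ((j+1) mod n) mod int n \<and> (pot2 j + int m) mod int n = pot2 j mod int n)"
    unfolding pot2_def by simp
qed

lemma n_gt: "(m+1) * (2*m) < n" unfolding n_def by (simp add: algebra_simps)

lemma lowX:
  assumes c: "c \<in> f2vec (2*n)" and orth: "\<And>i. i < n \<Longrightarrow> ip (2*n) c (HZ i) = 0"
    and ns: "c \<notin> f2span (HX ` {..<n})"
  shows "d \<le> card {J. J < 2*n \<and> c J \<noteq> 0}"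
proof -
  have np: "\<not> (pu c = 0 \<and> pv c = 0)" using step1[OF c orth] ns by blast
  have A: "ip (2*n) c (cw pot1 m pot1 (m+1) 0) = of_nat m * pu c + of_nat (m+1) * pv c"
    by (rule cut_val[OF ok1 orth])
  have B: "ip (2*n) c (cw bu2 (m+1) pot2 m 0) = of_nat (m+1) * pu c + of_nat m * pv c"
    by (rule cut_val[OF ok2 orth])
  have "n \<le> (m+1) * card {J. J < 2*n \<and> c J \<noteq> 0}"
  proof (cases "even m")
    case True
    then have "(of_nat m :: bit) = 0" "(of_nat (m+1) :: bit) = 1" by (simp_all add: of_nat_bit)
    then have "ip (2*n) c (cw pot1 m pot1 (m+1) 0) = pv c" "ip (2*n) c (cw bu2 (m+1) pot2 m 0) = pu c"
      using A B by simp_all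
    then have "ip (2*n) c (cw pot1 m pot1 (m+1) 0) = 1 \<or> ip (2*n) c (cw bu2 (m+1) pot2 m 0) = 1"
      using np by auto
    then show ?thesis
      using cut_bound[OF ok1 orth _ _] cut_bound[OF ok2 orth _ _] by auto
  next
    case False
    then have "(of_nat m :: bit) = 1" "(of_nat (m+1) :: bit) = 0" by (simp_all add: of_nat_bit)
    then have "ip (2*n) c (cw pot1 m pot1 (m+1) 0) = pu c" "ip (2*n) c (cw bu2 (m+1) pot2 m 0) = pv c"
      using A B by simp_all
    then have "ip (2*n) c (cw pot1 m pot1 (m+1) 0) = 1 \<or> ip (2*n) c (cw bu2 (m+1) pot2 m 0) = 1"
      using np by auto
    then show ?thesis
      using cut_bound[OF ok1 orth _ _] cut_bound[OF ok2 orth _ _] by auto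
  qed
  then show ?thesis
  proof -
    assume h: "n \<le> (m+1) * card {J. J < 2*n \<and> c J \<noteq> 0}"
    show ?thesis
    proof (rule ccontr)
      assume "\<not> d \<le> card {J. J < 2*n \<and> c J \<noteq> 0}"
      then have "card {J. J < 2*n \<and> c J \<noteq> 0} \<le> 2*m" unfolding d_def by simp
      then have "(m+1) * card {J. J < 2*n \<and> c J \<noteq> 0} \<le> (m+1) * (2*m)" by (rule mult_le_mono2)
      then show False using h n_gt by linarith
    qed
  qed
qed

end


lemma negmod: "(x::nat) < n \<Longrightarrow> (n - x) mod n = (if x = 0 then 0 else n - x)"
  by auto
lemma negeq: "(x::nat) < n \<Longrightarrow> y < n \<Longrightarrow> ((n - x) mod n = y) = ((n - y) mod n = x)"
  by (simp add: negmod) linarith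
lemma negeq2: "(x::nat) < n \<Longrightarrow> y < n \<Longrightarrow> k < n \<Longrightarrow> ((n - x) mod n = (y+k) mod n) = ((n - y) mod n = (x+k) mod n)"
  by (simp add: negmod mod_lt2) linarith

context gbc
begin

definition pi :: "nat \<Rightarrow> nat" where
  "pi J = (if J < n then n + (n - J) mod n else (n - (J - n)) mod n)"

lemma neg_lt: "x < n \<Longrightarrow> (n - x) mod n < n" using n5 by auto
lemma neg_inv: "x < n \<Longrightarrow> (n - (n - x) mod n) mod n = x" by (auto simp: negmod)

lemma pi_lt: "J < 2*n \<Longrightarrow> pi J < 2*n"
proof -
  assume J: "J < 2*n"
  show ?thesis
  proof (cases "J < n")
    case True
    then show ?thesis unfolding pi_def using neg_lt[OF True] by simp
  next
    case False
    then have "J - n < n" using J by simp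
    have "(n - (J-n)) mod n < n" using n5 by (intro mod_less_divisor) auto
    then show ?thesis unfolding pi_def if_not_P[OF False] by linarith
  qed
qed

lemma pi_inv: "J < 2*n \<Longrightarrow> pi (pi J) = J"
proof -
  assume J: "J < 2*n"
  show ?thesis
  proof (cases "J < n")
    case True
    have "pi J = n + (n - J) mod n" unfolding pi_def using True by simp
    moreover have "\<not> n + (n - J) mod n < n" by simp
    ultimately have "pi (pi J) = (n - (n - J) mod n) mod n" unfolding pi_def by simp
    then show ?thesis using neg_inv[OF True] by simp
  next
    case False
    define j where "j = J - n"
    have j: "j < n" "J = n + j" using J False unfolding j_def by auto
    have "pi J = (n - j) mod n" unfolding pi_def j_def using False by simp
    then have "pi (pi J) = n + (n - (n - j) mod n) mod n" unfolding pi_def using neg_lt[OF j(1)] by simp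
    then show ?thesis using neg_inv[OF j(1)] j by simp
  qed
qed

lemma pi_key: "i < n \<Longrightarrow> J < 2*n \<Longrightarrow> HX i (pi J) = HZ ((n - i) mod n) J"
proof -
  assume i: "i < n" and J: "J < 2*n"
  have ni: "(n - i) mod n < n" by (rule neg_lt[OF i])
  show ?thesis
  proof (cases "J < n")
    case True
    have "HX i (pi J) = of_bool ((n - J) mod n = i \<or> (n - J) mod n = (i+d) mod n)"
      unfolding pi_def using True i neg_lt[OF True] by (simp add: hxV)
    also have "\<dots> = of_bool ((n - i) mod n = J \<or> (n - i) mod n = (J+d) mod n)"
      by (simp only: negeq[OF True i] negeq2[OF True i d_lt_n])
    also have "\<dots> = HZ ((n - i) mod n) J" using True ni by (simp add: hzU)
    finally show ?thesis .
  next
    case False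
    define j where "j = J - n"
    have j: "j < n" "J = n + j" using J False unfolding j_def by auto
    have "HX i (pi J) = of_bool ((n - j) mod n = i \<or> (n - j) mod n = (i+1) mod n)"
      unfolding pi_def using False i neg_lt[OF j(1)] j by (simp add: hxU)
    also have "\<dots> = of_bool ((n - i) mod n = j \<or> (n - i) mod n = (j+1) mod n)"
      using negeq2[OF j(1) i, of 1] n5 by (simp only: negeq[OF j(1) i])
    also have "\<dots> = HZ ((n - i) mod n) J" using j ni by (simp add: hzV)
    finally show ?thesis .
  qed
qed

lemma pi_key2: "i < n \<Longrightarrow> J < 2*n \<Longrightarrow> HZ i (pi J) = HX ((n - i) mod n) J"
proof -
  assume i: "i < n" and J: "J < 2*n"
  have "HX ((n - i) mod n) (pi (pi J)) = HZ ((n - (n - i) mod n) mod n) (pi J)"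
    using neg_lt[OF i] pi_lt[OF J] by (rule pi_key)
  then show ?thesis using pi_inv[OF J] neg_inv[OF i] by simp
qed

lemma pi_bij: "bij_betw pi {..<2*n} {..<2*n}"
proof -
  have inj: "inj_on pi {..<2*n}" by (rule inj_on_inverseI[where g=pi]) (auto simp: pi_inv)
  moreover have "pi ` {..<2*n} \<subseteq> {..<2*n}" using pi_lt by auto
  ultimately have "pi ` {..<2*n} = {..<2*n}" by (intro endo_inj_surj) auto
  with inj show ?thesis unfolding bij_betw_def by auto
qed

lemma sum_pi: "(\<Sum>J<2*n. f (pi J)) = (\<Sum>J<2*n. f J)"
  using sum.reindex_bij_betw[OF pi_bij, of f] by simp

end


context gbc
begin

lemma lowZ:
  assumes z: "z \<in> f2vec (2*n)" and orth: "\<And>i. i < n \<Longrightarrow> ip (2*n) z (HX i) = 0"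
    and ns: "z \<notin> f2span (HZ ` {..<n})"
  shows "d \<le> card {J. J < 2*n \<and> z J \<noteq> 0}"
proof -
  define c where "c J = (if J < 2*n then z (pi J) else 0)" for J
  have c: "c \<in> f2vec (2*n)" unfolding c_def f2vec_def by auto
  have orthc: "ip (2*n) c (HZ i) = 0" if i: "i < n" for i
  proof -
    have "ip (2*n) c (HZ i) = (\<Sum>J<2*n. z (pi J) * HZ i J)" unfolding ip_def c_def by (rule sum.cong[OF refl]) simp
    also have "\<dots> = (\<Sum>J<2*n. z (pi (pi J)) * HZ i (pi J))" by (rule sum_pi[symmetric])
    also have "\<dots> = (\<Sum>J<2*n. z J * HX ((n - i) mod n) J)"
      by (rule sum.cong[OF refl]) (simp add: pi_inv pi_key2[OF i])
    also have "\<dots> = 0" using orth[OF neg_lt[OF i]] unfolding ip_def .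
    finally show ?thesis .
  qed
  have nsc: "c \<notin> f2span (HX ` {..<n})"
  proof
    assume "c \<in> f2span (HX ` {..<n})"
    then obtain I where I: "I \<subseteq> {..<n}" "c = (\<lambda>J. \<Sum>i\<in>I. HX i J)" unfolding spanX by auto
    define I' where "I' = (\<lambda>i. (n - i) mod n) ` I"
    have I': "I' \<subseteq> {..<n}"
    proof
      fix x assume "x \<in> I'"
      then obtain i where "i \<in> I" "x = (n - i) mod n" unfolding I'_def by auto
      then show "x \<in> {..<n}" using I(1) neg_lt by auto
    qed
    have injs: "inj_on (\<lambda>i. (n - i) mod n) I"
      by (rule inj_on_inverseI[where g="\<lambda>i. (n - i) mod n"]) (use I neg_inv in auto)
    have "z = (\<lambda>J. \<Sum>i\<in>I'. HZ i J)"
    proof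
      fix J
      show "z J = (\<Sum>i\<in>I'. HZ i J)"
      proof (cases "J < 2*n")
        case True
        have "z J = c (pi J)" unfolding c_def using True pi_lt pi_inv by simp
        also have "\<dots> = (\<Sum>i\<in>I. HX i (pi J))" using I(2) by simp
        also have "\<dots> = (\<Sum>i\<in>I. HZ ((n - i) mod n) J)"
          using I(1) True by (intro sum.cong) (auto simp: pi_key)
        also have "\<dots> = (\<Sum>i\<in>I'. HZ i J)" unfolding I'_def using injs by (simp add: sum.reindex)
        finally show ?thesis .
      next
        case False
        then show ?thesis using z unfolding f2vec_def by (auto simp: hz_out intro!: sum.neutral[symmetric])
      qed
    qed
    then have "z \<in> f2span (HZ ` {..<n})" unfolding spanZ using I' by auto
    then show False using ns by simp
  qed
  have "d \<le> card {J. J < 2*n \<and> c J \<noteq> 0}" by (rule lowX[OF c orthc nsc])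
  moreover have "card {J. J < 2*n \<and> c J \<noteq> 0} = card {J. J < 2*n \<and> z J \<noteq> 0}"
  proof -
    define A where "A = {J. J < 2*n \<and> z J \<noteq> 0}"
    define B where "B = {J. J < 2*n \<and> c J \<noteq> 0}"
    have "pi ` A = B"
    proof
      show "pi ` A \<subseteq> B"
      proof
        fix y assume "y \<in> pi ` A"
        then obtain J where J: "J < 2*n" "z J \<noteq> 0" "y = pi J" unfolding A_def by auto
        have p: "pi J < 2*n" by (rule pi_lt[OF J(1)])
        have "c (pi J) = z J" unfolding c_def using p pi_inv[OF J(1)] by simp
        then show "y \<in> B" unfolding B_def using J p by simp
      qed
      show "B \<subseteq> pi ` A"
      proof
        fix J assume "J \<in> B"
        then have J: "J < 2*n" "c J \<noteq> 0" unfolding B_def by auto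
        then have zJ: "z (pi J) \<noteq> 0" unfolding c_def by simp
        have "pi J \<in> A" unfolding A_def using pi_lt[OF J(1)] zJ by simp
        moreover have "J = pi (pi J)" using pi_inv[OF J(1)] by simp
        ultimately show "J \<in> pi ` A" by (rule rev_image_eqI)
      qed
    qed
    moreover have "inj_on pi A"
    proof (rule inj_onI)
      fix x y assume "x \<in> A" "y \<in> A" "pi x = pi y"
      then show "x = y" unfolding A_def using pi_inv by (metis mem_Collect_eq)
    qed
    ultimately have "card B = card A" using card_image by blast
    then show ?thesis unfolding A_def B_def .
  qed
  ultimately show ?thesis by simp
qed

end


lemma modk: "0 \<le> r \<Longrightarrow> r < N \<Longrightarrow> 0 \<le> k \<Longrightarrow> k < N \<Longrightarrow> ((r::int) - k) mod N = (if k \<le> r then r - k else r - k + N)"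
proof (cases "k \<le> r")
  case True
  assume "0 \<le> r" "r < N" "0 \<le> k" "k < N"
  then show ?thesis using True by (simp add: mod_pos_pos_trivial)
next
  case False
  assume a: "0 \<le> r" "r < N" "0 \<le> k" "k < N"
  have "(r - k) mod N = (r - k + N) mod N" by simp
  also have "\<dots> = r - k + N" using a False by (intro mod_pos_pos_trivial) auto
  finally show ?thesis using False by simp
qed

context gbc
begin

definition z0 where "z0 = cw pot1 m pot1 (m+1) 0"

lemma z0U: "j < n \<Longrightarrow> z0 j = of_bool ((0 - pot1 j - 1) mod int n < int m)"
  unfolding z0_def cw_def cP_def by simp
lemma z0V: "j < n \<Longrightarrow> z0 (n+j) = of_bool ((0 - pot1 j - 1) mod int n < int (m+1))"
  unfolding z0_def cw_def cP_def by simp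
lemma z0_vec: "z0 \<in> f2vec (2*n)" unfolding f2vec_def z0_def cw_def cP_def by auto

lemma pot1_s1: "pot1 ((i+1) mod n) mod int n = (pot1 i + int (m+1)) mod int n"
proof -
  have "pot1 ((i+1) mod n) mod int n = (int (m+1) * int i + int (m+1) * int 1) mod int n"
    unfolding pot1_def by (rule cong_helper)
  then show ?thesis unfolding pot1_def by simp
qed

lemma pot1_sd: "pot1 ((i+d) mod n) mod int n = (pot1 i + int m) mod int n"
proof -
  have "pot1 ((i+d) mod n) mod int n = (int (m+1) * int i + int (m+1) * int d) mod int n"
    unfolding pot1_def by (rule cong_helper)
  also have "\<dots> = ((pot1 i + int m) + int n) mod int n" unfolding md_int pot1_def by (simp add: algebra_simps)
  also have "\<dots> = (pot1 i + int m) mod int n" by (rule mod_add_self2)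
  finally show ?thesis .
qed

lemma negc: "X mod int n = (Y + k) mod int n \<Longrightarrow> (0 - X - 1) mod int n = ((0 - Y - 1) mod int n - k) mod int n"
proof -
  assume "X mod int n = (Y + k) mod int n"
  then have "int n dvd (X - (Y + k))" by (simp add: mod_eq_dvd_iff)
  moreover have "(0 - X - 1) - ((0 - Y - 1) - k) = - (X - (Y + k))" by simp
  ultimately have "int n dvd ((0 - X - 1) - ((0 - Y - 1) - k))" by (simp only: dvd_minus_iff)
  then have "(0 - X - 1) mod int n = ((0 - Y - 1) - k) mod int n" by (simp add: mod_eq_dvd_iff)
  also have "\<dots> = ((0 - Y - 1) mod int n - k) mod int n" by (simp add: mod_diff_left_eq)
  finally show ?thesis .
qed

lemma n_big: "int (2*m + 2) < int n" using mm1 n_def2 by linarith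

lemma z0_orth: "i < n \<Longrightarrow> ip (2*n) z0 (HX i) = 0"
proof -
  assume i: "i < n"
  define r where "r = (0 - pot1 i - 1) mod int n"
  have r: "0 \<le> r" "r < int n" unfolding r_def using n5 by auto
  have e1: "(0 - pot1 ((i+1) mod n) - 1) mod int n = (r - int (m+1)) mod int n"
    unfolding r_def by (rule negc[OF pot1_s1])
  have e2: "(0 - pot1 ((i+d) mod n) - 1) mod int n = (r - int m) mod int n"
    unfolding r_def by (rule negc[OF pot1_sd])
  have k1: "(r - int (m+1)) mod int n = (if int (m+1) \<le> r then r - int (m+1) else r - int (m+1) + int n)"
    using r n_big by (intro modk) auto
  have k2: "(r - int m) mod int n = (if int m \<le> r then r - int m else r - int m + int n)"
    using r n_big by (intro modk) auto
  have "ip (2*n) z0 (HX i) = z0 i + z0 ((i+1) mod n) + z0 (n+i) + z0 (n + (i+d) mod n)"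
    by (rule ip_HX[OF i])
  also have "\<dots> = of_bool (r < int m) + of_bool ((r - int (m+1)) mod int n < int m)
      + of_bool (r < int (m+1)) + of_bool ((r - int m) mod int n < int (m+1))"
  proof -
    have a1: "z0 i = of_bool (r < int m)" unfolding r_def by (rule z0U[OF i])
    have a2: "z0 ((i+1) mod n) = of_bool ((r - int (m+1)) mod int n < int m)"
      using z0U[OF lt1(1)[of i]] unfolding e1 .
    have a3: "z0 (n+i) = of_bool (r < int (m+1))" unfolding r_def by (rule z0V[OF i])
    have a4: "z0 (n + (i+d) mod n) = of_bool ((r - int m) mod int n < int (m+1))"
      using z0V[OF lt1(2)[of i]] unfolding e2 .
    show ?thesis by (simp only: a1 a2 a3 a4)
  qed
  also have "\<dots> = 0"
  proof -
    consider "r < int m" | "r = int m" | "int m < r \<and> r \<le> 2 * int m" | "2 * int m < r" by linarith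
    then show ?thesis
    proof cases
      case 1
      then have "\<not> (r - int (m+1) + int n < int m)" "\<not> (r - int m + int n < int (m+1))" using r n_big by auto
      then show ?thesis unfolding k1 k2 using 1 by simp
    next
      case 2
      then have "\<not> (r - int (m+1) + int n < int m)" using r n_big by auto
      then show ?thesis unfolding k1 k2 using 2 by simp
    next
      case 3
      then show ?thesis unfolding k1 k2 by simp
    next
      case 4
      then show ?thesis unfolding k1 k2 by simp
    qed
  qed
  finally show ?thesis .
qed

lemma dvd_pot: "int n dvd (int (m+1) * t) \<Longrightarrow> int n dvd t"
proof -
  assume h: "int n dvd (int (m+1) * t)"
  have e: "int (2*m) * int (m+1) = int n - 1" unfolding n_def by (simp add: algebra_simps)
  have "int n dvd int (2*m) * (int (m+1) * t)" using h by (rule dvd_mult)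
  moreover have "int (2*m) * (int (m+1) * t) = (int n - 1) * t" by (simp only: mult.assoc[symmetric] e)
  moreover have "(int n - 1) * t = int n * t - t" by (simp add: algebra_simps)
  ultimately have "int n dvd (int n * t - t)" by simp
  moreover have "int n dvd int n * t" by simp
  ultimately have "int n dvd (int n * t - (int n * t - t))" by (rule dvd_diff[rotated])
  then show ?thesis by simp
qed

lemma count_pot1:
  assumes l: "l \<le> n"
  shows "card {j. j < n \<and> (0 - pot1 j - 1) mod int n < int l} = l"
proof -
  define g where "g j = nat ((0 - pot1 j - 1) mod int n)" for j
  have "inj_on g {..<n}"
  proof (rule inj_onI)
    fix x y assume xy: "x \<in> {..<n}" "y \<in> {..<n}" "g x = g y"
    then have "(0 - pot1 x - 1) mod int n = (0 - pot1 y - 1) mod int n"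
      unfolding g_def using n5 by (simp add: nat_eq_iff2)
    then have "int n dvd ((0 - pot1 x - 1) - (0 - pot1 y - 1))" by (simp add: mod_eq_dvd_iff)
    then have "int n dvd (int (m+1) * (int y - int x))" unfolding pot1_def by (simp add: algebra_simps)
    then have "int n dvd (int y - int x)" by (rule dvd_pot)
    then show "x = y" using xy by (metis int_dvd_small lessThan_iff)
  qed
  moreover have "g ` {..<n} \<subseteq> {..<n}" unfolding g_def using n5 by (auto simp: nat_less_iff)
  ultimately have "card {k. k < n \<and> g k < l} = l" using l by (intro count_bij) auto
  moreover have "{k. k < n \<and> g k < l} = {j. j < n \<and> (0 - pot1 j - 1) mod int n < int l}"
    unfolding g_def using n5 by (auto simp: nat_less_iff)
  ultimately show ?thesis by simp
qed

lemma z0_cardU: "card {j. j < n \<and> z0 j \<noteq> 0} = m"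
proof -
  have "{j. j < n \<and> z0 j \<noteq> 0} = {j. j < n \<and> (0 - pot1 j - 1) mod int n < int m}" by (auto simp: z0U)
  then show ?thesis using count_pot1[of m] d_lt_n unfolding d_def by simp
qed
lemma z0_cardV: "card {j. j < n \<and> z0 (n+j) \<noteq> 0} = m+1"
proof -
  have "{j. j < n \<and> z0 (n+j) \<noteq> 0} = {j. j < n \<and> (0 - pot1 j - 1) mod int n < int (m+1)}" by (auto simp: z0V)
  then show ?thesis using count_pot1[of "m+1"] d_lt_n unfolding d_def by simp
qed

lemma z0_weight: "card {J. J < 2*n \<and> z0 J \<noteq> 0} = d"
  using card_split2n[of n "\<lambda>J. z0 J \<noteq> 0"] z0_cardU z0_cardV unfolding d_def by simp

lemma bit_of_card: "(\<Sum>j<n. (c j :: bit)) = of_nat (card {j. j < n \<and> c j \<noteq> 0})"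
proof -
  have "(\<Sum>j<n. c j) = (\<Sum>j<n. (of_bool (c j \<noteq> 0) :: bit))" by (rule sum.cong) (auto simp: of_bool_def)
  then show ?thesis by (simp add: bit_sum_bool)
qed

lemma z0_pu: "pu z0 = of_nat m" unfolding pu_def bit_of_card z0_cardU ..
lemma z0_pv: "pv z0 = of_nat (m+1)"
  unfolding pv_def using bit_of_card[of "\<lambda>j. z0 (n+j)"] z0_cardV by simp

lemma z0_ns: "z0 \<notin> f2span (HZ ` {..<n})"
proof
  assume "z0 \<in> f2span (HZ ` {..<n})"
  then have "pu z0 = 0" "pv z0 = 0" using par_spanZ by auto
  then show False unfolding z0_pu z0_pv by (simp add: of_nat_bit)
qed

end


lemma bit_cancel: "((s::bit) + b) + (s + c) = b + c" by (cases s; cases b; cases c) auto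

lemma sum_symdiff:
  fixes f :: "nat \<Rightarrow> bit"
  assumes "finite X" "finite Y"
  shows "sum f X + sum f Y = sum f ((X - Y) \<union> (Y - X))"
proof -
  have 1: "sum f X = sum f (X \<inter> Y) + sum f (X - Y)" using assms(1) by (rule sum.Int_Diff)
  have 2: "sum f Y = sum f (X \<inter> Y) + sum f (Y - X)" using assms(2) sum.Int_Diff[of Y f X] by (simp add: Int_commute)
  have 3: "sum f ((X - Y) \<union> (Y - X)) = sum f (X - Y) + sum f (Y - X)" using assms by (intro sum.union_disjoint) auto
  show ?thesis unfolding 1 2 3 by (rule bit_cancel)
qed

lemma of_bool_sum0: "(of_bool P :: bit) + of_bool Q = 0 \<Longrightarrow> (P \<longleftrightarrow> Q)"
  by (cases P; cases Q) auto

lemma rank_gen: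
  fixes H :: "nat \<Rightarrow> nat \<Rightarrow> bit"
  assumes n2: "2 \<le> n" and inj: "inj_on H {..<n}" and sum0: "\<And>J. (\<Sum>i<n. H i J) = 0"
    and indep: "\<And>K. K \<subseteq> {..<n-1} \<Longrightarrow> (\<And>J. (\<Sum>i\<in>K. H i J) = 0) \<Longrightarrow> K = {}"
  shows "f2rank H n = n - 1"
proof -
  define S where "S = f2span (H ` {..<n})"
  define F where "F I = (\<lambda>J. \<Sum>i\<in>I. H i J)" for I
  have spanS: "S = F ` Pow {..<n}" unfolding S_def F_def span_inj[OF inj finite_lessThan] by auto
  have injB: "inj_on H {..<n-1}" using inj by (rule inj_on_subset) auto
  define B0 where "B0 = H ` {..<n-1}"
  have cardB0: "card B0 = n - 1" unfolding B0_def using injB by (simp add: card_image)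
  have spanB0: "f2span B0 = F ` Pow {..<n-1}" unfolding B0_def F_def span_inj[OF injB finite_lessThan] by auto
  have last: "H (n-1) J = (\<Sum>i<n-1. H i J)" for J
  proof -
    have "{..<n} = insert (n-1) {..<n-1}" using n2 by auto
    then have "H (n-1) J + (\<Sum>i<n-1. H i J) = 0" using sum0[of J] by simp
    then show ?thesis by (simp add: bit_eq_add)
  qed
  have eqspan: "f2span B0 = S"
  proof
    show "f2span B0 \<subseteq> S" unfolding spanB0 spanS by (intro image_mono) auto
    show "S \<subseteq> f2span B0"
    proof
      fix v assume "v \<in> S"
      then obtain I where I: "I \<subseteq> {..<n}" "v = F I" unfolding spanS by auto
      show "v \<in> f2span B0"
      proof (cases "n - 1 \<in> I")
        case False
        have "I \<subseteq> {..<n-1}"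
        proof
          fix x assume x: "x \<in> I"
          then have "x < n" "x \<noteq> n-1" using I(1) False by auto
          then show "x \<in> {..<n-1}" by simp
        qed
        then show ?thesis unfolding spanB0 using I(2) by auto
      next
        case True
        define I0 where "I0 = I - {n-1}"
        have fin: "finite I0" "finite I" using I(1) finite_subset unfolding I0_def by auto
        have "v = F (({..<n-1} - I0) \<union> (I0 - {..<n-1}))"
        proof
          fix J
          have "v J = H (n-1) J + (\<Sum>i\<in>I0. H i J)" unfolding I(2) F_def I0_def
            using True fin(2) by (simp add: sum.remove)
          also have "\<dots> = (\<Sum>i<n-1. H i J) + (\<Sum>i\<in>I0. H i J)" by (simp only: last)
          also have "\<dots> = F (({..<n-1} - I0) \<union> (I0 - {..<n-1})) J" unfolding F_def
            using fin by (intro sum_symdiff) auto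
          finally show "v J = F (({..<n-1} - I0) \<union> (I0 - {..<n-1})) J" .
        qed
        moreover have "({..<n-1} - I0) \<union> (I0 - {..<n-1}) \<subseteq> {..<n-1}" using I(1) unfolding I0_def by auto
        ultimately show ?thesis unfolding spanB0 by auto
      qed
    qed
  qed
  have finS: "finite S" unfolding spanS by simp
  have lowS: "2 ^ (n-1) \<le> card S"
  proof -
    have "inj_on F (Pow {..<n-1})"
    proof (rule inj_onI)
      fix I I' assume II: "I \<in> Pow {..<n-1}" "I' \<in> Pow {..<n-1}" "F I = F I'"
      have fin: "finite I" "finite I'" using II finite_subset by auto
      have "(\<Sum>i\<in>(I - I') \<union> (I' - I). H i J) = 0" for J
      proof -
        have "F I J = F I' J" using II(3) by simp
        then have "(\<Sum>i\<in>I. H i J) + (\<Sum>i\<in>I'. H i J) = 0" unfolding F_def by (simp add: bit_eq_add)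
        then show ?thesis using sum_symdiff[OF fin, of "\<lambda>i. H i J"] by simp
      qed
      moreover have "(I - I') \<union> (I' - I) \<subseteq> {..<n-1}" using II by auto
      ultimately have "(I - I') \<union> (I' - I) = {}" using indep by blast
      then show "I = I'" by auto
    qed
    then have "card (F ` Pow {..<n-1}) = 2 ^ (n-1)" by (simp add: card_image card_Pow)
    moreover have "F ` Pow {..<n-1} \<subseteq> S" unfolding spanS by (intro image_mono) auto
    ultimately show ?thesis using card_mono[OF finS] by metis
  qed
  have lower: "n - 1 \<le> card B" if B: "finite B" "f2span B = S" for B
  proof -
    have "f2span B \<subseteq> (\<lambda>R. (\<lambda>j. \<Sum>r\<in>R. r j)) ` Pow B" unfolding f2span_def by auto
    then have "card (f2span B) \<le> card ((\<lambda>R. (\<lambda>j. \<Sum>r\<in>R. r j)) ` Pow B)"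
      using B(1) by (intro card_mono) auto
    also have "\<dots> \<le> card (Pow B)" by (rule card_image_le) (simp add: B(1))
    also have "\<dots> = 2 ^ card B" using B(1) by (rule card_Pow)
    finally have c1: "card S \<le> 2 ^ card B" using B(2) by simp
    have "2 ^ (n-1) \<le> (2::nat) ^ card B" by (rule order_trans[OF lowS c1])
    then show ?thesis by (rule power_le_imp_le_exp[rotated]) simp
  qed
  show ?thesis unfolding f2rank_def S_def[symmetric]
  proof (rule Least_equality)
    show "\<exists>B. finite B \<and> card B = n - 1 \<and> f2span B = S"
      using cardB0 eqspan unfolding B0_def by blast
    show "\<And>y. \<exists>B. finite B \<and> card B = y \<and> f2span B = S \<Longrightarrow> n - 1 \<le> y" using lower by blast
  qed
qed

lemma chain_empty:
  assumes "0 \<notin> K" "\<And>j. Suc j < n \<Longrightarrow> (Suc j \<in> K \<longleftrightarrow> j \<in> K)"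
  shows "j < n \<Longrightarrow> j \<notin> K"
proof (induction j)
  case 0 then show ?case using assms(1) by simp
next
  case (Suc j) then show ?case using assms(2)[of j] by simp
qed

context gbc
begin

lemma rankX: "f2rank HX n = n - 1"
proof (rule rank_gen)
  show "2 \<le> n" using n5 by simp
  show "inj_on HX {..<n}" by (rule inj_HX)
  show "(\<Sum>i<n. HX i J) = 0" for J
  proof (cases "J < n")
    case True then show ?thesis using sumHX_U[of "{..<n}" J] lt1 by simp
  next
    case False
    show ?thesis
    proof (cases "J < 2*n")
      case True
      then have "J = n + (J - n)" "J - n < n" using False by auto
      then show ?thesis using sumHX_V[of "{..<n}" "J-n"] lt1 by (metis lessThan_iff order_refl bit_add_self of_bool_eq(2))
    next
      case False then show ?thesis by (simp add: hx_out)
    qed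
  qed
  show "K = {}" if K: "K \<subseteq> {..<n-1}" and h: "\<And>J. (\<Sum>i\<in>K. HX i J) = 0" for K
  proof -
    have K': "K \<subseteq> {..<n}" using K by auto
    have eq: "j \<in> K \<longleftrightarrow> (j+n-1) mod n \<in> K" if "j < n" for j
      using h[of j] sumHX_U[OF K' that] by (intro of_bool_sum0) simp
    have "0 \<notin> K" using eq[of 0] K n5 by auto
    moreover have "Suc j \<in> K \<longleftrightarrow> j \<in> K" if "Suc j < n" for j
      using eq[OF that] that by (simp add: mod_sub)
    ultimately have "j \<notin> K" if "j < n" for j using chain_empty that by blast
    then show ?thesis using K' by auto
  qed
qed

lemma rankZ: "f2rank HZ n = n - 1"
proof (rule rank_gen)
  show "2 \<le> n" using n5 by simp
  show "inj_on HZ {..<n}" by (rule inj_HZ)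
  show "(\<Sum>i<n. HZ i J) = 0" for J
  proof (cases "J < n")
    case True then show ?thesis using sumHZ_U[of "{..<n}" J] lt1 by simp
  next
    case False
    show ?thesis
    proof (cases "J < 2*n")
      case True
      then have "J = n + (J - n)" "J - n < n" using False by auto
      then show ?thesis using sumHZ_V[of "{..<n}" "J-n"] lt1 by (metis lessThan_iff order_refl bit_add_self of_bool_eq(2))
    next
      case False then show ?thesis by (simp add: hz_out)
    qed
  qed
  show "K = {}" if K: "K \<subseteq> {..<n-1}" and h: "\<And>J. (\<Sum>i\<in>K. HZ i J) = 0" for K
  proof -
    have K': "K \<subseteq> {..<n}" using K by auto
    have eq: "j \<in> K \<longleftrightarrow> (j+1) mod n \<in> K" if "j < n" for j
      using h[of "n+j"] sumHZ_V[OF K' that] by (intro of_bool_sum0) simp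
    have "n - 1 \<notin> K" using K by auto
    moreover have "(n - 1 + 1) mod n = 0" using n5 by simp
    ultimately have "0 \<notin> K" using eq[of "n-1"] n5 by auto
    moreover have "Suc j \<in> K \<longleftrightarrow> j \<in> K" if "Suc j < n" for j
      using eq[of j] that by simp
    ultimately have "j \<notin> K" if "j < n" for j using chain_empty that by blast
    then show ?thesis using K' by auto
  qed
qed

lemma dim2: "gb_dim n a b = 2"
  unfolding gb_dim_def rankX rankZ using n5 by simp

end


context gbc
begin

lemma two_pts_gen:
  assumes "p \<noteq> q" "p < n" "q < n" "\<And>j. j < n \<Longrightarrow> f j = of_bool (j = p \<or> j = q)"
  shows "card {j. j < n \<and> (f j :: bit) \<noteq> 0} = 2"
proof -
  have "{j. j < n \<and> f j \<noteq> 0} = {j. j < n \<and> (of_bool (j = p \<or> j = q) :: bit) \<noteq> 0}" using assms(4) by auto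
  then show ?thesis using card_two_pts[OF assms(1-3)] by simp
qed

lemma two_pts_gen':
  assumes "p \<noteq> q" "p < n" "q < n" "\<And>j. j < n \<Longrightarrow> f j = of_bool (j = p \<or> j = q)"
  shows "card {i. i < n \<and> (f i :: bit) \<noteq> 0} = 2"
  using two_pts_gen[OF assms] .

lemma regX: "regular_2_4 n HX"
  unfolding regular_2_4_def
proof (intro conjI allI impI)
  fix i assume i: "i < n"
  have "card {j. j < n \<and> HX i j \<noteq> 0} = 2"
    using ne1[OF i] i lt1 by (intro two_pts_gen) (auto simp: hxU)
  moreover have "card {j. j < n \<and> HX i (n+j) \<noteq> 0} = 2"
    using ned[OF i] i lt1 by (intro two_pts_gen[where f="\<lambda>j. HX i (n+j)"]) (auto simp: hxV)
  ultimately show "card {j. j < 2*n \<and> HX i j \<noteq> 0} = 4" using card_split2n[of n "\<lambda>j. HX i j \<noteq> 0"] by simp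
next
  fix j assume j: "j < 2*n"
  show "card {i. i < n \<and> HX i j \<noteq> 0} = 2"
  proof (cases "j < n")
    case True
    then show ?thesis using nem1[OF True] lt1 by (intro two_pts_gen[where f="\<lambda>i. HX i j"]) (auto simp: hxU_col)
  next
    case False
    obtain j' where jj: "j = n + j'" "j' < n" using j False by (metis add_diff_inverse_nat add_less_imp_less_left mult_2)
    show ?thesis unfolding jj(1) using nemd[OF jj(2)] lt1 jj(2)
      by (intro two_pts_gen[where f="\<lambda>i. HX i (n+j')"]) (auto simp: hxV_col)
  qed
qed

lemma regZ: "regular_2_4 n HZ"
  unfolding regular_2_4_def
proof (intro conjI allI impI)
  fix i assume i: "i < n"
  have "card {j. j < n \<and> HZ i j \<noteq> 0} = 2"
    using nemd[OF i] i lt1 by (intro two_pts_gen) (auto simp: hzU_row)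
  moreover have "card {j. j < n \<and> HZ i (n+j) \<noteq> 0} = 2"
    using nem1[OF i] i lt1 by (intro two_pts_gen[where f="\<lambda>j. HZ i (n+j)"]) (auto simp: hzV_row)
  ultimately show "card {j. j < 2*n \<and> HZ i j \<noteq> 0} = 4" using card_split2n[of n "\<lambda>j. HZ i j \<noteq> 0"] by simp
next
  fix j assume j: "j < 2*n"
  show "card {i. i < n \<and> HZ i j \<noteq> 0} = 2"
  proof (cases "j < n")
    case True
    then show ?thesis using ned[OF True] lt1 by (intro two_pts_gen[where f="\<lambda>i. HZ i j"]) (auto simp: hzU)
  next
    case False
    obtain j' where jj: "j = n + j'" "j' < n" using j False by (metis add_diff_inverse_nat add_less_imp_less_left mult_2)
    show ?thesis unfolding jj(1) using ne1[OF jj(2)] lt1 jj(2)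
      by (intro two_pts_gen[where f="\<lambda>i. HZ i (n+j')"]) (auto simp: hzV)
  qed
qed


lemma row_in_span: "i \<in> A \<Longrightarrow> H i \<in> f2span (H ` A)"
  unfolding f2span_def mem_Collect_eq by (intro exI[of _ "{H i}"]) auto

lemma zero_in_span: "(\<lambda>_. 0) \<in> f2span S"
  unfolding f2span_def mem_Collect_eq by (intro exI[of _ "{}"]) auto

lemma logical_weight:
  assumes p: "p \<in> gb_logical n a b"
  shows "d \<le> pauli_weight (2*n) p"
proof -
  obtain x z where xz: "p = (x, z)" by (cases p)
  have x: "x \<in> f2vec (2*n)" and z: "z \<in> f2vec (2*n)" using p xz unfolding gb_logical_def paulis_def by auto
  have comm: "\<And>s. s \<in> gb_stab n a b \<Longrightarrow> symp (2*n) (x,z) s = 0" using p xz unfolding gb_logical_def by auto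
  have ns: "(x, z) \<notin> gb_stab n a b" using p xz unfolding gb_logical_def by auto
  have orthX: "ip (2*n) x (HZ i) = 0" if i: "i < n" for i
  proof -
    have "HZ i \<in> f2span (HZ ` {..<n})" using i by (intro row_in_span) simp
    then have "((\<lambda>_. 0), HZ i) \<in> gb_stab n a b" unfolding gb_stab_def using zero_in_span by (intro SigmaI)
    then have "symp (2*n) (x,z) ((\<lambda>_. 0), HZ i) = 0" by (rule comm)
    then show ?thesis unfolding symp_def ip_def by simp
  qed
  have orthZ: "ip (2*n) z (HX i) = 0" if i: "i < n" for i
  proof -
    have "HX i \<in> f2span (HX ` {..<n})" using i by (intro row_in_span) simp
    then have "(HX i, (\<lambda>_. 0)) \<in> gb_stab n a b" unfolding gb_stab_def using zero_in_span by (intro SigmaI)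
    then have "symp (2*n) (x,z) (HX i, (\<lambda>_. 0)) = 0" by (rule comm)
    then show ?thesis unfolding symp_def ip_def by simp
  qed
  have sub1: "card {J. J < 2*n \<and> x J \<noteq> 0} \<le> pauli_weight (2*n) p"
    unfolding pauli_weight_def xz by (intro card_mono) auto
  have sub2: "card {J. J < 2*n \<and> z J \<noteq> 0} \<le> pauli_weight (2*n) p"
    unfolding pauli_weight_def xz by (intro card_mono) auto
  show ?thesis
  proof (cases "x \<in> f2span (HX ` {..<n})")
    case False
    then show ?thesis using lowX[OF x orthX False] sub1 by linarith
  next
    case True
    then have "z \<notin> f2span (HZ ` {..<n})" using ns unfolding gb_stab_def by auto
    then show ?thesis using lowZ[OF z orthZ] sub2 by linarith
  qed
qed

lemma p0_logical: "((\<lambda>_. 0), z0) \<in> gb_logical n a b"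
proof -
  have z: "(\<lambda>_. (0::bit)) \<in> f2vec (2*n)" unfolding f2vec_def by simp
  have P: "((\<lambda>_. 0), z0) \<in> paulis (2*n)" unfolding paulis_def using z z0_vec by (rule SigmaI)
  have NS: "((\<lambda>_. 0), z0) \<notin> gb_stab n a b" unfolding gb_stab_def using z0_ns by blast
  have C: "symp (2*n) ((\<lambda>_. 0), z0) s = 0" if s: "s \<in> gb_stab n a b" for s
  proof -
    obtain sx sz where sxz: "s = (sx, sz)" by (cases s)
    have "sx \<in> f2span (HX ` {..<n})" using s unfolding sxz gb_stab_def by blast
    then have "ip (2*n) z0 sx = 0" using z0_orth by (rule orth_spanX[rotated])
    then show ?thesis unfolding sxz symp_def ip_def by simp
  qed
  show ?thesis unfolding gb_logical_def using P NS C by blast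
qed

lemma p0_weight: "pauli_weight (2*n) ((\<lambda>_. 0), z0) = d"
proof -
  have "{j. j < 2*n \<and> (fst ((\<lambda>_. (0::bit)), z0) j \<noteq> 0 \<or> snd ((\<lambda>_. (0::bit)), z0) j \<noteq> 0)} = {J. J < 2*n \<and> z0 J \<noteq> 0}"
    by simp
  then show ?thesis unfolding pauli_weight_def using z0_weight by simp
qed

lemma distance: "gb_distance n a b = d"
  unfolding gb_distance_def
proof (rule Least_equality)
  show "\<exists>p\<in>gb_logical n a b. pauli_weight (2*n) p = d" using p0_logical p0_weight by blast
  show "\<And>y. \<exists>p\<in>gb_logical n a b. pauli_weight (2*n) p = y \<Longrightarrow> d \<le> y" using logical_weight by blast
qed

lemma s0_stab: "(HX 0, (\<lambda>_. 0)) \<in> gb_stab n a b"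
proof -
  have "HX 0 \<in> f2span (HX ` {..<n})" using n5 by (intro row_in_span) simp
  then show ?thesis unfolding gb_stab_def using zero_in_span by (intro SigmaI)
qed

lemma s0_ne: "(HX 0, (\<lambda>_. 0)) \<noteq> ((\<lambda>_. 0), (\<lambda>_. 0))"
proof
  assume "(HX 0, (\<lambda>_. 0)) = ((\<lambda>_. (0::bit)), (\<lambda>_. 0))"
  then have "HX 0 = (\<lambda>_. 0)" by simp
  then have "HX 0 0 = 0" by simp
  moreover have "HX 0 0 = 1" using n5 by (simp add: hxU)
  ultimately show False by simp
qed

lemma s0_weight: "pauli_weight (2*n) (HX 0, (\<lambda>_. 0)) = 4"
proof -
  have "{j. j < 2*n \<and> (fst (HX 0, (\<lambda>_. (0::bit))) j \<noteq> 0 \<or> snd (HX 0, (\<lambda>_. (0::bit))) j \<noteq> 0)} = {j. j < 2*n \<and> HX 0 j \<noteq> 0}"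
    by simp
  moreover have "card {j. j < 2*n \<and> HX 0 j \<noteq> 0} = 4"
  proof -
    have "0 < n" using n5 by simp
    then show ?thesis using regX unfolding regular_2_4_def by blast
  qed
  ultimately show ?thesis unfolding pauli_weight_def by simp
qed

lemma ring_a: "ring_elem n a" unfolding ring_elem_def f2vec_def a_def using n5 by auto
lemma ring_b: "ring_elem n b" unfolding ring_elem_def f2vec_def b_def using d_lt_n by auto

end


theorem theorem4:
  fixes d :: nat
  assumes "odd d" and "d \<ge> 3"
  shows "\<exists>n a b. ring_elem n a \<and> ring_elem n b \<and> 2*n = d^2 + 1 \<and>
           gb_dim n a b = 2 \<and> gb_distance n a b = d \<and> gb_regular_2_4 n a b \<and>
           (d \<noteq> 3 \<longrightarrow> gb_degenerate n a b \<and>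
              (\<exists>s\<in>gb_stab n a b. s \<noteq> (\<lambda>_. 0, \<lambda>_. 0) \<and> pauli_weight (2*n) s = 4 \<and> 4 < d))"
proof -
  define m where "m = d div 2"
  have dm: "d = 2*m+1" using assms(1) unfolding m_def by (simp add: odd_two_times_div_two_succ)
  have m1: "1 \<le> m" using assms(2) dm by simp
  interpret G: gbc m by unfold_locales (rule m1)
  have dG: "G.d = d" unfolding G.d_def dm ..
  have sq: "2 * G.n = d^2 + 1" using G.dd dG by (simp add: power2_eq_square)
  have dist: "gb_distance G.n G.a G.b = d" using G.distance dG by simp
  have reg: "gb_regular_2_4 G.n G.a G.b" unfolding gb_regular_2_4_def using G.regX G.regZ by simp
  have deg: "gb_degenerate G.n G.a G.b \<and>
              (\<exists>s\<in>gb_stab G.n G.a G.b. s \<noteq> (\<lambda>_. 0, \<lambda>_. 0) \<and> pauli_weight (2*G.n) s = 4 \<and> 4 < d)"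
    if "d \<noteq> 3"
  proof -
    have d5: "4 < d" using that assms dm by presburger
    have "gb_degenerate G.n G.a G.b"
      unfolding gb_degenerate_def dist
      by (rule bexI[OF _ G.s0_stab]) (use G.s0_ne G.s0_weight d5 in simp)
    moreover have "\<exists>s\<in>gb_stab G.n G.a G.b. s \<noteq> (\<lambda>_. 0, \<lambda>_. 0) \<and> pauli_weight (2*G.n) s = 4 \<and> 4 < d"
      by (rule bexI[OF _ G.s0_stab]) (use G.s0_ne G.s0_weight d5 in simp)
    ultimately show ?thesis by simp
  qed
  show ?thesis
    using G.ring_a G.ring_b sq G.dim2 dist reg deg by blast
qed


end
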